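(* Let $\nu\in\mathcal D$ and $s>0$. The map $\mu\mapsto\nu\circledast(s,\mu)$ is continuous from $(\mathcal D_0,d_0)$ to $(\mathcal D,d_S)$.
   Context: $\mathcal M_f(\mathbb R_+)$ is the space of finite measures on $\mathbb R_+$ with the weak topology, metrized by the bounded Lipschitz distance $d_{BL}(\mu,\nu)=\sup|\langle\mu,f\rangle-\langle\nu,f\rangle|$ over $f:\mathbb R_+\to\mathbb R$ with $\sup|f|+\mathrm{Lip}(f)\le1$. $\mathcal D$ is the space of càdlàg paths $\mathbb R_+\to\mathcal M_f(\mathbb R_+)$ with the Skorokhod $J_1$ topology and associated Skorokhod distance $d_S$ (built on $d_{BL}$). For $\mu\in\mathcal D$, $\sigma(\mu)=\inf\{t>0:\mu(t+\cdot)\equiv0\}$. $\mathcal D_0=\{\mu\in\mathcal D:\sigma(\mu)<\infty,\ \mu_t\ne0$ for $0<t<\sigma(\mu)$, and $\mu_{\sigma(\mu)-}=0$ if $\sigma(\mu)>0\}$, with distance $d_0(\mu,\nu)=d_S(\mu,\nu)+|\sigma(\mu)-\sigma(\nu)|$. Grafting. For a finite measure $\mu$, $H(\mu)=\sup\operatorname{supp}\mu$ ($H(0)=0$); $[\mu,\nu]$ is defined by $\langle[\mu,\nu],f\rangle=\langle\mu,f\rangle+\langle\nu,f(H(\mu)+\cdot)\rangle$. For $\nu\in\mathcal D$, $\mu$ with finite lifetime $\sigma'$ and $s\ge0$, $\nu\circledast(s,\mu)$ is the path equal to $\nu(t)$ for $t<s$, $[\nu(s),\mu(t-s)]$ for $s\le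 t<s+\sigma'$, and $\nu(t-\sigma')$ for $t\ge s+\sigma'$ (if $\nu$ has finite lifetime $\le s$, it equals $\nu$). *)

theory Defs
  imports "HOL-Analysis.Analysis"
begin

text \<open>A finite measure on R_+ is represented as a finite Borel measure on the reals
  that gives no mass to the negative half-line.\<close>

definition MF :: "real measure set" where
  "MF = {M. sets M = sets borel \<and> finite_measure M \<and> emeasure M {..<0} = 0}"

definition zeroM :: "real measure" where
  "zeroM = null_measure borel"

text \<open>Test functions for the bounded Lipschitz distance: sup|f| + Lip(f) \<le> 1.
  (Functions on R_+ with this property extend to R via f(max 0 x) with the same
  constants, and integrals only see R_+, so quantifying over functions on R is
  equivalent.)\<close>

definition BL1 :: "(real \<Rightarrow> real) set" where
  "BL1 = {f. \<exists>B L. B \<ge> 0 \<and> L \<ge> 0 \<and> B + L \<le> 1 \<and> (\<forall>x. \<bar>f x\<bar> \<le> B)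
               \<and> (\<forall>x y. \<bar>f x - f y\<bar> \<le> L * \<bar>x - y\<bar>)}"

definition dBL :: "real measure \<Rightarrow> real measure \<Rightarrow> real" where
  "dBL M N = Sup {\<bar>(\<integral>x. f x \<partial>M) - (\<integral>x. f x \<partial>N)\<bar> | f. f \<in> BL1}"

text \<open>Paths are functions real \<Rightarrow> real measure; only times t \<ge> 0 matter.\<close>

definition cadlag :: "(real \<Rightarrow> real measure) set" where
  "cadlag = {mu. (\<forall>t\<ge>0. mu t \<in> MF)
     \<and> (\<forall>t\<ge>0. \<forall>e>0. \<exists>d>0. \<forall>r. t \<le> r \<and> r < t + d \<longrightarrow> dBL (mu r) (mu t) < e)
     \<and> (\<forall>t>0. \<exists>m\<in>MF. \<forall>e>0. \<exists>d>0. \<forall>r. t - d < r \<and> r < t \<longrightarrow> dBL (mu r) m < e)}"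

definition gammaL :: "(real \<Rightarrow> real) \<Rightarrow> real" where
  "gammaL l = Sup {\<bar>ln ((l s - l t) / (s - t))\<bar> | s t. 0 \<le> t \<and> t < s}"

definition LamSet :: "(real \<Rightarrow> real) set" where
  "LamSet = {l. strict_mono_on {0..} l \<and> l ` {0..} = {0..}
     \<and> (\<exists>C. \<forall>s t. 0 \<le> t \<and> t < s \<longrightarrow> \<bar>ln ((l s - l t) / (s - t))\<bar> \<le> C)}"

definition dSu :: "(real \<Rightarrow> real measure) \<Rightarrow> (real \<Rightarrow> real measure) \<Rightarrow> (real \<Rightarrow> real) \<Rightarrow> real \<Rightarrow> real" where
  "dSu x y l u = Sup {min 1 (dBL (x (min t u)) (y (min (l t) u))) | t. 0 \<le> t}"

text \<open>Skorokhod J1 metric on D([0,\<infinity>), M_f) (Ethier--Kurtz, Ch. 3, (5.2)).\<close>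

definition dS :: "(real \<Rightarrow> real measure) \<Rightarrow> (real \<Rightarrow> real measure) \<Rightarrow> real" where
  "dS x y = Inf {max (gammaL l)
        (enn2real (\<integral>\<^sup>+ u. indicator {0..} u * ennreal (exp (- u) * dSu x y l u) \<partial>lborel))
      | l. l \<in> LamSet}"

definition deadset :: "(real \<Rightarrow> real measure) \<Rightarrow> real set" where
  "deadset mu = {t. t > 0 \<and> (\<forall>r\<ge>0. mu (t + r) = zeroM)}"

definition lifetime :: "(real \<Rightarrow> real measure) \<Rightarrow> real" where
  "lifetime mu = Inf (deadset mu)"

definition D0 :: "(real \<Rightarrow> real measure) set" where
  "D0 = {mu. mu \<in> cadlag \<and> deadset mu \<noteq> {}
     \<and> (\<forall>t. 0 < t \<and> t < lifetime mu \<longrightarrow> mu t \<noteq> zeroM)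
     \<and> (lifetime mu > 0 \<longrightarrow>
          (\<forall>e>0. \<exists>d>0. \<forall>t. lifetime mu - d < t \<and> t < lifetime mu \<longrightarrow> dBL (mu t) zeroM < e))}"

definition d0 :: "(real \<Rightarrow> real measure) \<Rightarrow> (real \<Rightarrow> real measure) \<Rightarrow> real" where
  "d0 x y = dS x y + \<bar>lifetime x - lifetime y\<bar>"

definition supp :: "real measure \<Rightarrow> real set" where
  "supp M = {x. \<forall>e>0. emeasure M (ball x e) > 0}"

text \<open>H(mu) = sup supp mu, with H(0) = 0 (support lies in R_+).  Convention for
  unbounded support (where the paper's H is +\<infinity> and grafting is undefined): H = 0.\<close>
definition Hgt :: "real measure \<Rightarrow> real" where
  "Hgt M = (if bdd_above (supp M) then Sup (insert 0 (supp M)) else 0)"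

definition graftM :: "real measure \<Rightarrow> real measure \<Rightarrow> real measure" where
  "graftM M N = measure_of UNIV (sets borel)
     (\<lambda>A. emeasure M A + emeasure (distr N borel (\<lambda>x. Hgt M + x)) A)"

definition graft :: "(real \<Rightarrow> real measure) \<Rightarrow> real \<Rightarrow> (real \<Rightarrow> real measure) \<Rightarrow> (real \<Rightarrow> real measure)" where
  "graft nu s mu = (if deadset nu \<noteq> {} \<and> lifetime nu \<le> s then nu
     else (\<lambda>t. if t < s then nu t
               else if t < s + lifetime mu then graftM (nu s) (mu (t - s))
               else nu (t - lifetime mu)))"

end

theory Submission
  imports Defs "HOL-Probability.Distributions"
begin

lemma MF_D:
  assumes "M \<in> MF"
  shows "sets M = sets borel" "finite_measure M" "emeasure M {..<0} = 0" "space M = UNIV"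
proof -
  show 1: "sets M = sets borel" "finite_measure M" "emeasure M {..<0} = 0"
    using assms unfolding MF_def by blast+
  show "space M = UNIV" using sets_eq_imp_space_eq[OF 1(1)] by simp
qed

lemma BL1_D:
  assumes "f \<in> BL1"
  shows "\<And>x. \<bar>f x\<bar> \<le> 1" "continuous_on UNIV f" "f \<in> borel_measurable borel"
proof -
  obtain B L where BL: "B \<ge> 0" "L \<ge> 0" "B + L \<le> 1" "\<forall>x. \<bar>f x\<bar> \<le> B"
     "\<forall>x y. \<bar>f x - f y\<bar> \<le> L * \<bar>x - y\<bar>" using assms unfolding BL1_def by blast
  show "\<And>x. \<bar>f x\<bar> \<le> 1" by (rule order_trans[OF BL(4)[rule_format]]) (use BL(2,3) in linarith)
  have "L-lipschitz_on UNIV f" using BL(2,5) unfolding lipschitz_on_def dist_real_def by blast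
  then show c: "continuous_on UNIV f" by (rule lipschitz_on_continuous_on)
  then show "f \<in> borel_measurable borel" by (rule borel_measurable_continuous_onI)
qed

lemma BL1_zero: "(\<lambda>x. 0) \<in> BL1"
  unfolding BL1_def by (auto intro!: exI[of _ 0])

lemma BL1_shift: assumes "f \<in> BL1" shows "(\<lambda>x. f (H + x)) \<in> BL1"
proof -
  obtain B L where BL: "B \<ge> 0" "L \<ge> 0" "B + L \<le> 1" "\<forall>x. \<bar>f x\<bar> \<le> B"
     "\<forall>x y. \<bar>f x - f y\<bar> \<le> L * \<bar>x - y\<bar>" using assms unfolding BL1_def by blast
  have "\<forall>x y. \<bar>f (H+x) - f(H+y)\<bar> \<le> L * \<bar>x - y\<bar>"
  proof (intro allI)
    fix x y
    have "\<bar>f (H+x) - f(H+y)\<bar> \<le> L * \<bar>(H+x) - (H+y)\<bar>" using BL(5) by blast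
    then show "\<bar>f (H+x) - f(H+y)\<bar> \<le> L * \<bar>x - y\<bar>" by simp
  qed
  moreover have "\<forall>x. \<bar>f (H+x)\<bar> \<le> B" using BL(4) by blast
  ultimately show ?thesis unfolding BL1_def using BL(1-3) by blast
qed

lemma integrable_MF: assumes "M \<in> MF" "f \<in> BL1" shows "integrable M f"
proof -
  interpret finite_measure M by (rule MF_D(2)[OF assms(1)])
  show ?thesis
  proof (rule integrable_const_bound[where B=1])
    show "AE x in M. norm (f x) \<le> 1" using BL1_D(1)[OF assms(2)] by (intro AE_I2) simp
    show "f \<in> borel_measurable M"
      by (subst measurable_cong_sets[OF MF_D(1)[OF assms(1)] refl]) (rule BL1_D(3)[OF assms(2)])
  qed
qed

lemma abs_int_MF: assumes "M \<in> MF" "f \<in> BL1" shows "\<bar>\<integral>x. f x \<partial>M\<bar> \<le> measure M UNIV"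
proof -
  interpret finite_measure M by (rule MF_D(2)[OF assms(1)])
  have "\<bar>\<integral>x. f x \<partial>M\<bar> \<le> (\<integral>x. \<bar>f x\<bar> \<partial>M)" by (rule integral_abs_bound)
  also have "\<dots> \<le> (\<integral>x. 1 \<partial>M)"
  proof (rule integral_mono)
    show "integrable M (\<lambda>x. \<bar>f x\<bar>)" using integrable_MF[OF assms] by (rule integrable_abs)
    show "integrable M (\<lambda>x. 1::real)" by simp
    show "\<And>x. x \<in> space M \<Longrightarrow> \<bar>f x\<bar> \<le> 1" using BL1_D(1)[OF assms(2)] by blast
  qed
  finally have "norm (\<integral>x. f x \<partial>M) \<le> measure M (space M)" by simp
  then show ?thesis using MF_D(4)[OF assms(1)] by simp
qed

lemma zeroM_MF: "zeroM \<in> MF"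
  unfolding MF_def zeroM_def
  by (auto intro!: finite_measureI simp: emeasure_null_measure)

lemma int_zeroM[simp]: "(\<integral>x. f x \<partial>zeroM) = 0"
  unfolding zeroM_def by simp

lemma dBL_le: assumes "\<And>f. f \<in> BL1 \<Longrightarrow> \<bar>(\<integral>x. f x \<partial>M) - (\<integral>x. f x \<partial>N)\<bar> \<le> c"
  shows "dBL M N \<le> c"
  unfolding dBL_def
  by (rule cSup_least) (use BL1_zero assms in blast)+

lemma dBL_ge: assumes "M \<in> MF" "N \<in> MF" "f \<in> BL1"
  shows "\<bar>(\<integral>x. f x \<partial>M) - (\<integral>x. f x \<partial>N)\<bar> \<le> dBL M N"
  unfolding dBL_def
proof (rule cSup_upper)
  show "\<bar>(\<integral>x. f x \<partial>M) - (\<integral>x. f x \<partial>N)\<bar> \<in> {\<bar>(\<integral>x. f x \<partial>M) - (\<integral>x. f x \<partial>N)\<bar> | f. f \<in> BL1}"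
    using assms(3) by blast
  show "bdd_above {\<bar>(\<integral>x. f x \<partial>M) - (\<integral>x. f x \<partial>N)\<bar> | f. f \<in> BL1}"
  proof (rule bdd_aboveI[where M="measure M UNIV + measure N UNIV"])
    fix y assume "y \<in> {\<bar>(\<integral>x. f x \<partial>M) - (\<integral>x. f x \<partial>N)\<bar> | f. f \<in> BL1}"
    then obtain g where g: "g \<in> BL1" "y = \<bar>(\<integral>x. g x \<partial>M) - (\<integral>x. g x \<partial>N)\<bar>" by blast
    have "\<bar>(\<integral>x. g x \<partial>M) - (\<integral>x. g x \<partial>N)\<bar> \<le> \<bar>\<integral>x. g x \<partial>M\<bar> + \<bar>\<integral>x. g x \<partial>N\<bar>" by (rule abs_triangle_ineq4)
    also have "\<dots> \<le> measure M UNIV + measure N UNIV"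
      using abs_int_MF[OF assms(1) \<open>g \<in> BL1\<close>] abs_int_MF[OF assms(2) \<open>g \<in> BL1\<close>] by linarith
    finally show "y \<le> measure M UNIV + measure N UNIV" using g(2) by simp
  qed
qed

lemma dBL_nonneg: assumes "M \<in> MF" "N \<in> MF" shows "0 \<le> dBL M N"
  using dBL_ge[OF assms BL1_zero] by simp

lemma dBL_sym: "dBL M N = dBL N M"
  unfolding dBL_def by (simp add: abs_minus_commute)

lemma dBL_refl[simp]: "dBL M M = 0"
proof -
  have "{\<bar>(\<integral>x. f x \<partial>M) - (\<integral>x. f x \<partial>M)\<bar> | f. f \<in> BL1} = {0}" using BL1_zero by auto
  then show ?thesis unfolding dBL_def by simp
qed

lemma dBL_tri: assumes "M \<in> MF" "N \<in> MF" "K \<in> MF" shows "dBL M K \<le> dBL M N + dBL N K"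
proof (rule dBL_le)
  fix f assume f: "f \<in> BL1"
  have "\<bar>(\<integral>x. f x \<partial>M) - (\<integral>x. f x \<partial>K)\<bar> \<le> \<bar>(\<integral>x. f x \<partial>M) - (\<integral>x. f x \<partial>N)\<bar> + \<bar>(\<integral>x. f x \<partial>N) - (\<integral>x. f x \<partial>K)\<bar>"
    by arith
  then show "\<bar>(\<integral>x. f x \<partial>M) - (\<integral>x. f x \<partial>K)\<bar> \<le> dBL M N + dBL N K"
    using dBL_ge[OF assms(1,2) f] dBL_ge[OF assms(2,3) f] by linarith
qed

lemma meas_borel: "sets K = sets borel \<Longrightarrow> f \<in> borel_measurable borel \<Longrightarrow> f \<in> borel_measurable K"
  by (subst measurable_cong_sets[of K borel]) auto

lemma sets_borel_in: "sets K = sets borel \<Longrightarrow> A \<in> sets borel \<Longrightarrow> A \<in> sets K"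
  by simp

lemma Hgt_nonneg: "0 \<le> Hgt M"
proof (cases "bdd_above (supp M)")
  case True
  then have "bdd_above (insert 0 (supp M))" by simp
  then have "0 \<le> Sup (insert 0 (supp M))" by (rule cSup_upper[rotated]) simp
  then show ?thesis using True unfolding Hgt_def by simp
qed (simp add: Hgt_def)

lemma shift_meas: "(\<lambda>x. H + x :: real) \<in> borel_measurable borel"
  by simp

definition shiftD :: "real measure \<Rightarrow> real measure \<Rightarrow> real measure" where
  "shiftD M N = distr N borel (\<lambda>x. Hgt M + x)"

lemma shiftD_sets: "sets (shiftD M N) = sets borel"
  unfolding shiftD_def by simp

lemma graftM_sets: "sets (graftM M N) = sets borel"
  unfolding graftM_def
  by (metis sets.sets_measure_of_eq space_borel)

lemma graftM_space: "space (graftM M N) = UNIV"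
  using sets_eq_imp_space_eq[OF graftM_sets] by simp

lemma graftM_emeasure:
  assumes M: "M \<in> MF" and N: "N \<in> MF" and A: "A \<in> sets borel"
  shows "emeasure (graftM M N) A = emeasure M A + emeasure (shiftD M N) A"
proof -
  have sM: "sets M = sets borel" by (rule MF_D(1)[OF M])
  have sD: "sets (shiftD M N) = sets borel" by (rule shiftD_sets)
  have sa: "sigma_algebra UNIV (sets borel)"
    using sets.sigma_algebra_axioms[of borel] by simp
  have pos: "positive (sets borel) (\<lambda>A. emeasure M A + emeasure (shiftD M N) A)"
    unfolding positive_def by simp
  have ca: "countably_additive (sets borel) (\<lambda>A. emeasure M A + emeasure (shiftD M N) A)"
    unfolding countably_additive_def
  proof (intro allI impI)
    fix F :: "nat \<Rightarrow> real set"
    assume F: "range F \<subseteq> sets borel" "disjoint_family F" "\<Union> (range F) \<in> sets borel"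
    have "(\<Sum>i. emeasure M (F i)) = emeasure M (\<Union>i. F i)"
      by (rule suminf_emeasure) (use F sM in auto)
    moreover have "(\<Sum>i. emeasure (shiftD M N) (F i)) = emeasure (shiftD M N) (\<Union>i. F i)"
      by (rule suminf_emeasure) (use F sD in auto)
    ultimately show "(\<Sum>i. emeasure M (F i) + emeasure (shiftD M N) (F i)) =
          emeasure M (\<Union> (range F)) + emeasure (shiftD M N) (\<Union> (range F))"
      by (simp add: suminf_add[symmetric])
  qed
  show ?thesis unfolding graftM_def shiftD_def[symmetric]
    by (rule emeasure_measure_of_sigma[OF sa pos ca A])
qed

lemma shiftD_emeasure:
  assumes N: "N \<in> MF" and A: "A \<in> sets borel"
  shows "emeasure (shiftD M N) A = emeasure N ((\<lambda>x. Hgt M + x) -` A)"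
proof -
  have m: "(\<lambda>x. Hgt M + x) \<in> measurable N borel"
    by (rule meas_borel[OF MF_D(1)[OF N]]) simp
  show ?thesis unfolding shiftD_def using emeasure_distr[OF m A] MF_D(4)[OF N] by simp
qed

lemma graftM_MF: assumes M: "M \<in> MF" and N: "N \<in> MF" shows "graftM M N \<in> MF"
proof -
  have fM: "emeasure M UNIV \<noteq> \<infinity>"
    using finite_measure.emeasure_finite[OF MF_D(2)[OF M], of UNIV] MF_D(4)[OF M] by simp
  have fN: "emeasure N UNIV \<noteq> \<infinity>"
    using finite_measure.emeasure_finite[OF MF_D(2)[OF N], of UNIV] MF_D(4)[OF N] by simp
  have "emeasure (graftM M N) UNIV = emeasure M UNIV + emeasure N UNIV"
    using graftM_emeasure[OF M N, of UNIV] shiftD_emeasure[OF N, of UNIV M] by simp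
  then have fin: "finite_measure (graftM M N)"
    using fM fN by (intro finite_measureI) (simp add: graftM_space)
  have "(\<lambda>x. Hgt M + x) -` {..<0} \<subseteq> {..<0}" using Hgt_nonneg[of M] by auto
  then have "emeasure N ((\<lambda>x. Hgt M + x) -` {..<0}) \<le> emeasure N {..<0}"
    by (rule emeasure_mono[OF _ sets_borel_in[OF MF_D(1)[OF N]]]) simp_all
  then have "emeasure (shiftD M N) {..<0} = 0"
    using MF_D(3)[OF N] shiftD_emeasure[OF N, of "{..<0}" M] by simp
  then have "emeasure (graftM M N) {..<0} = 0"
    using graftM_emeasure[OF M N, of "{..<0}"] MF_D(3)[OF M] by simp
  then show ?thesis unfolding MF_def using graftM_sets fin by blast
qed

lemma graftM_nn:
  fixes f :: "real \<Rightarrow> ennreal"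
  assumes M: "M \<in> MF" and N: "N \<in> MF" and f: "f \<in> borel_measurable borel"
  shows "(\<integral>\<^sup>+x. f x \<partial>graftM M N) = (\<integral>\<^sup>+x. f x \<partial>M) + (\<integral>\<^sup>+x. f x \<partial>shiftD M N)"
  using f
proof (induct rule: borel_measurable_induct)
  case (cong f g)
  then have "f = g" by auto
  then show ?case using cong by simp
next
  case (set A)
  have "(\<integral>\<^sup>+x. indicator A x \<partial>graftM M N) = emeasure (graftM M N) A"
    by (rule nn_integral_indicator) (simp add: graftM_sets set)
  also have "\<dots> = emeasure M A + emeasure (shiftD M N) A" by (rule graftM_emeasure[OF M N set])
  also have "emeasure M A = (\<integral>\<^sup>+x. indicator A x \<partial>M)"
    by (rule nn_integral_indicator[symmetric]) (simp add: MF_D(1)[OF M] set)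
  also have "emeasure (shiftD M N) A = (\<integral>\<^sup>+x. indicator A x \<partial>shiftD M N)"
    by (rule nn_integral_indicator[symmetric]) (simp add: shiftD_sets set)
  finally show ?case .
next
  case (mult u c)
  have m1: "u \<in> borel_measurable (graftM M N)" by (rule meas_borel[OF graftM_sets mult(2)])
  have m2: "u \<in> borel_measurable M" by (rule meas_borel[OF MF_D(1)[OF M] mult(2)])
  have m3: "u \<in> borel_measurable (shiftD M N)" by (rule meas_borel[OF shiftD_sets mult(2)])
  show ?case
    by (simp add: nn_integral_cmult m1 m2 m3 mult(4) distrib_left)
next
  case (add u v)
  have m1: "u \<in> borel_measurable (graftM M N)" "v \<in> borel_measurable (graftM M N)"
    by (rule meas_borel[OF graftM_sets add(1)], rule meas_borel[OF graftM_sets add(4)])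
  have m2: "u \<in> borel_measurable M" "v \<in> borel_measurable M"
    by (rule meas_borel[OF MF_D(1)[OF M] add(1)], rule meas_borel[OF MF_D(1)[OF M] add(4)])
  have m3: "u \<in> borel_measurable (shiftD M N)" "v \<in> borel_measurable (shiftD M N)"
    by (rule meas_borel[OF shiftD_sets add(1)], rule meas_borel[OF shiftD_sets add(4)])
  show ?case
    by (simp add: nn_integral_add m1 m2 m3 add(3) add(7) algebra_simps)
next
  case (seq U)
  have m1: "\<And>i. U i \<in> borel_measurable (graftM M N)" by (rule meas_borel[OF graftM_sets seq(1)])
  have m2: "\<And>i. U i \<in> borel_measurable M" by (rule meas_borel[OF MF_D(1)[OF M] seq(1)])
  have m3: "\<And>i. U i \<in> borel_measurable (shiftD M N)" by (rule meas_borel[OF shiftD_sets seq(1)])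
  have i1: "incseq (\<lambda>i. integral\<^sup>N M (U i))"
    using seq(4) unfolding incseq_def by (auto intro!: nn_integral_mono simp: le_fun_def)
  have i2: "incseq (\<lambda>i. integral\<^sup>N (shiftD M N) (U i))"
    using seq(4) unfolding incseq_def by (auto intro!: nn_integral_mono simp: le_fun_def)
  have "(\<integral>\<^sup>+x. (SUP i. U i) x \<partial>graftM M N) = (SUP i. integral\<^sup>N (graftM M N) (U i))"
    unfolding SUP_apply by (rule nn_integral_monotone_convergence_SUP[OF seq(4) m1])
  also have "\<dots> = (SUP i. integral\<^sup>N M (U i) + integral\<^sup>N (shiftD M N) (U i))"
    using seq(3) by simp
  also have "\<dots> = (SUP i. integral\<^sup>N M (U i)) + (SUP i. integral\<^sup>N (shiftD M N) (U i))"
    by (rule ennreal_SUP_add[OF i1 i2])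
  also have "(SUP i. integral\<^sup>N M (U i)) = (\<integral>\<^sup>+x. (SUP i. U i) x \<partial>M)"
    unfolding SUP_apply by (rule nn_integral_monotone_convergence_SUP[OF seq(4) m2, symmetric])
  also have "(SUP i. integral\<^sup>N (shiftD M N) (U i)) = (\<integral>\<^sup>+x. (SUP i. U i) x \<partial>shiftD M N)"
    unfolding SUP_apply by (rule nn_integral_monotone_convergence_SUP[OF seq(4) m3, symmetric])
  finally show ?case .
qed

lemma ennreal_BL1_meas: assumes f: "f \<in> BL1" shows "(\<lambda>x. ennreal (f x)) \<in> borel_measurable borel"
  "(\<lambda>x. ennreal (- f x)) \<in> borel_measurable borel"
  using BL1_D(3)[OF f] by measurable

lemma graftM_int:
  assumes M: "M \<in> MF" and N: "N \<in> MF" and f: "f \<in> BL1"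
  shows "(\<integral>x. f x \<partial>graftM M N) = (\<integral>x. f x \<partial>M) + (\<integral>x. f (Hgt M + x) \<partial>N)"
proof -
  have G: "graftM M N \<in> MF" by (rule graftM_MF[OF M N])
  have iG: "integrable (graftM M N) f" by (rule integrable_MF[OF G f])
  have iM: "integrable M f" by (rule integrable_MF[OF M f])
  have m: "(\<lambda>x. Hgt M + x) \<in> measurable N borel"
    by (rule meas_borel[OF MF_D(1)[OF N]]) simp
  have iN: "integrable N (\<lambda>x. f (Hgt M + x))" by (rule integrable_MF[OF N BL1_shift[OF f]])
  have iD: "integrable (shiftD M N) f"
    unfolding shiftD_def by (subst integrable_distr_eq[OF m]) (use BL1_D(3)[OF f] iN in auto)
  have eD: "(\<integral>x. f x \<partial>shiftD M N) = (\<integral>x. f (Hgt M + x) \<partial>N)"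
    unfolding shiftD_def by (rule integral_distr[OF m BL1_D(3)[OF f]])
  note e1 = graftM_nn[OF M N ennreal_BL1_meas(1)[OF f]]
  note e2 = graftM_nn[OF M N ennreal_BL1_meas(2)[OF f]]
  have "(\<integral>x. f x \<partial>graftM M N) = enn2real (\<integral>\<^sup>+x. f x \<partial>graftM M N) - enn2real (\<integral>\<^sup>+x. ennreal (- f x) \<partial>graftM M N)"
    by (rule real_lebesgue_integral_def[OF iG])
  also have "\<dots> = (enn2real (\<integral>\<^sup>+x. f x \<partial>M) - enn2real (\<integral>\<^sup>+x. ennreal (- f x) \<partial>M))
     + (enn2real (\<integral>\<^sup>+x. f x \<partial>shiftD M N) - enn2real (\<integral>\<^sup>+x. ennreal (- f x) \<partial>shiftD M N))"
    unfolding e1 e2 using integrableD(2,3)[OF iM] integrableD(2,3)[OF iD]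
    by (simp add: enn2real_plus less_top)
  also have "\<dots> = (\<integral>x. f x \<partial>M) + (\<integral>x. f x \<partial>shiftD M N)"
    using real_lebesgue_integral_def[OF iM] real_lebesgue_integral_def[OF iD] by simp
  finally show ?thesis using eD by simp
qed

lemma dBL_graft2: assumes M: "M \<in> MF" and N: "N \<in> MF" and N': "N' \<in> MF"
  shows "dBL (graftM M N) (graftM M N') \<le> dBL N N'"
proof (rule dBL_le)
  fix f assume f: "f \<in> BL1"
  show "\<bar>(\<integral>x. f x \<partial>graftM M N) - (\<integral>x. f x \<partial>graftM M N')\<bar> \<le> dBL N N'"
    using dBL_ge[OF N N' BL1_shift[OF f, of "Hgt M"]] by (simp add: graftM_int[OF M _ f] N N')
qed

lemma dBL_graft0: assumes M: "M \<in> MF" and N: "N \<in> MF"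
  shows "dBL (graftM M N) M \<le> dBL N zeroM"
proof (rule dBL_le)
  fix f assume f: "f \<in> BL1"
  show "\<bar>(\<integral>x. f x \<partial>graftM M N) - (\<integral>x. f x \<partial>M)\<bar> \<le> dBL N zeroM"
    using dBL_ge[OF N zeroM_MF BL1_shift[OF f, of "Hgt M"]] by (simp add: graftM_int[OF M N f])
qed

lemma cadlagD:
  assumes "mu \<in> cadlag"
  shows "\<And>t. t \<ge> 0 \<Longrightarrow> mu t \<in> MF"
    "\<And>t e. t \<ge> 0 \<Longrightarrow> e > 0 \<Longrightarrow> \<exists>d>0. \<forall>r. t \<le> r \<and> r < t + d \<longrightarrow> dBL (mu r) (mu t) < e"
    "\<And>t. t > 0 \<Longrightarrow> \<exists>m\<in>MF. \<forall>e>0. \<exists>d>0. \<forall>r. t - d < r \<and> r < t \<longrightarrow> dBL (mu r) m < e"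
  using assms unfolding cadlag_def by blast+

lemma D0D: assumes "mu \<in> D0"
  shows "mu \<in> cadlag" "deadset mu \<noteq> {}"
    "lifetime mu > 0 \<Longrightarrow> e > 0 \<Longrightarrow> \<exists>d>0. \<forall>t. lifetime mu - d < t \<and> t < lifetime mu \<longrightarrow> dBL (mu t) zeroM < e"
  using assms unfolding D0_def by blast+

lemma lifetime_nonneg: assumes "deadset mu \<noteq> {}" shows "0 \<le> lifetime mu"
  unfolding lifetime_def
  by (rule cInf_greatest[OF assms]) (auto simp: deadset_def)

lemma dead_zero: assumes "deadset mu \<noteq> {}" "t > lifetime mu" shows "mu t = zeroM"
proof -
  obtain x where x: "x \<in> deadset mu" "x < t"
    using cInf_lessD[OF assms(1)] assms(2) unfolding lifetime_def by blast
  have A: "\<forall>r\<ge>0. mu (x + r) = zeroM" using x(1) unfolding deadset_def by blast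
  have "mu (x + (t - x)) = zeroM" by (rule A[rule_format]) (use x(2) in simp)
  then show ?thesis by simp
qed

lemma dead_dBL: assumes "mu \<in> D0" "t \<ge> lifetime mu" shows "dBL (mu t) zeroM = 0"
proof -
  have dn: "deadset mu \<noteq> {}" by (rule D0D(2)[OF assms(1)])
  have t0: "t \<ge> 0" using lifetime_nonneg[OF dn] assms(2) by linarith
  have MFt: "mu t \<in> MF" by (rule cadlagD(1)[OF D0D(1)[OF assms(1)] t0])
  have "dBL (mu t) zeroM \<le> e" if e: "e > 0" for e
  proof -
    obtain d where d: "d > 0" "\<forall>r. t \<le> r \<and> r < t + d \<longrightarrow> dBL (mu r) (mu t) < e"
      using cadlagD(2)[OF D0D(1)[OF assms(1)] t0 e] by blast
    have "mu (t + d/2) = zeroM" by (rule dead_zero[OF dn]) (use d assms in linarith)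
    moreover have "dBL (mu (t + d/2)) (mu t) < e" using d by auto
    ultimately show ?thesis by (simp add: dBL_sym)
  qed
  then have "dBL (mu t) zeroM \<le> 0" by (meson dense not_le)
  with dBL_nonneg[OF MFt zeroM_MF] show ?thesis by linarith
qed

lemma end_small: assumes "mu \<in> D0" "\<epsilon> > 0"
  shows "\<exists>\<rho>>0. \<forall>r\<ge>0. r > lifetime mu - \<rho> \<longrightarrow> dBL (mu r) zeroM < \<epsilon>"
proof (cases "lifetime mu > 0")
  case True
  obtain d where d: "d > 0" "\<forall>t. lifetime mu - d < t \<and> t < lifetime mu \<longrightarrow> dBL (mu t) zeroM < \<epsilon>"
    using D0D(3)[OF assms(1) True assms(2)] by blast
  show ?thesis
  proof (intro exI[of _ d] conjI allI impI)
    fix r assume r: "r \<ge> 0" "r > lifetime mu - d"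
    show "dBL (mu r) zeroM < \<epsilon>"
    proof (cases "r < lifetime mu")
      case True then show ?thesis using d r by blast
    next
      case False then show ?thesis using dead_dBL[OF assms(1)] assms(2) by simp
    qed
  qed (use d in simp)
next
  case False
  show ?thesis
  proof (intro exI[of _ 1] conjI allI impI)
    fix r :: real assume r: "r \<ge> 0" "r > lifetime mu - 1"
    then show "dBL (mu r) zeroM < \<epsilon>" using dead_dBL[OF assms(1), of r] False assms(2) by simp
  qed simp
qed

lemma graft_eq:
  assumes "\<not> (deadset nu \<noteq> {} \<and> lifetime nu \<le> s)"
  shows "graft nu s mu t = (if t < s then nu t else if t < s + lifetime mu then graftM (nu s) (mu (t - s))
           else nu (t - lifetime mu))"
  unfolding graft_def if_not_P[OF assms] by simp

lemma graft_cadlag: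
  assumes nu: "nu \<in> cadlag" and s: "s \<ge> 0" and mu: "mu \<in> D0"
    and nt: "\<not> (deadset nu \<noteq> {} \<and> lifetime nu \<le> s)"
  shows "graft nu s mu \<in> cadlag"
proof -
  define G where "G = graft nu s mu"
  define \<sigma> where "\<sigma> = lifetime mu"
  have \<sigma>0: "\<sigma> \<ge> 0" unfolding \<sigma>_def by (rule lifetime_nonneg[OF D0D(2)[OF mu]])
  have Gf: "\<And>t. G t = (if t < s then nu t else if t < s + \<sigma> then graftM (nu s) (mu (t - s)) else nu (t - \<sigma>))"
    unfolding G_def \<sigma>_def by (rule graft_eq[OF nt])
  have muc: "mu \<in> cadlag" by (rule D0D(1)[OF mu])
  have nus: "nu s \<in> MF" by (rule cadlagD(1)[OF nu s])
  have MF: "G t \<in> MF" if t: "t \<ge> 0" for t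
  proof -
    consider "t < s" | "s \<le> t" "t < s + \<sigma>" | "s + \<sigma> \<le> t" by linarith
    then show ?thesis
    proof cases
      case 1 then show ?thesis using Gf cadlagD(1)[OF nu t] by simp
    next
      case 2 then show ?thesis using Gf graftM_MF[OF nus cadlagD(1)[OF muc, of "t - s"]] by simp
    next
      case 3 then show ?thesis using Gf cadlagD(1)[OF nu, of "t - \<sigma>"] s \<sigma>0 by simp
    qed
  qed
  have RC: "\<exists>d>0. \<forall>r. t \<le> r \<and> r < t + d \<longrightarrow> dBL (G r) (G t) < e" if t: "t \<ge> 0" and e: "e > 0" for t e
  proof -
    consider "t < s" | "s \<le> t" "t < s + \<sigma>" | "s + \<sigma> \<le> t" by linarith
    then show ?thesis
    proof cases
      case 1
      obtain d where d: "d > 0" "\<forall>r. t \<le> r \<and> r < t + d \<longrightarrow> dBL (nu r) (nu t) < e"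
        using cadlagD(2)[OF nu t e] by blast
      show ?thesis
      proof (intro exI[of _ "min d (s - t)"] conjI allI impI)
        fix r assume r: "t \<le> r \<and> r < t + min d (s - t)"
        then have rs: "r < s" by linarith
        have "r < t + d" using r min.cobounded1[of d "s-t"] by linarith
        then have "dBL (nu r) (nu t) < e" using d r by blast
        then show "dBL (G r) (G t) < e" using rs 1 Gf by simp
      qed (use d 1 in simp)
    next
      case 2
      obtain d where d: "d > 0" "\<forall>r. t - s \<le> r \<and> r < t - s + d \<longrightarrow> dBL (mu r) (mu (t - s)) < e"
        using cadlagD(2)[OF muc _ e, of "t - s"] 2 by auto
      show ?thesis
      proof (intro exI[of _ "min d (s + \<sigma> - t)"] conjI allI impI)
        fix r assume r: "t \<le> r \<and> r < t + min d (s + \<sigma> - t)"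
        have "dBL (graftM (nu s) (mu (r - s))) (graftM (nu s) (mu (t - s))) \<le> dBL (mu (r - s)) (mu (t - s))"
          by (rule dBL_graft2[OF nus cadlagD(1)[OF muc] cadlagD(1)[OF muc]]) (use r 2 in auto)
        also have "\<dots> < e" using d r by auto
        moreover have "r < s + \<sigma>" using r min.cobounded2[of d "s + \<sigma> - t"] by linarith
        ultimately show "dBL (G r) (G t) < e" using r 2 Gf by simp
      qed (use d 2 in simp)
    next
      case 3
      obtain d where d: "d > 0" "\<forall>r. t - \<sigma> \<le> r \<and> r < t - \<sigma> + d \<longrightarrow> dBL (nu r) (nu (t - \<sigma>)) < e"
        using cadlagD(2)[OF nu _ e, of "t - \<sigma>"] 3 s by auto
      show ?thesis
      proof (intro exI[of _ d] conjI allI impI)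
        fix r assume r: "t \<le> r \<and> r < t + d"
        have "dBL (nu (r - \<sigma>)) (nu (t - \<sigma>)) < e" using d r by auto
        then show "dBL (G r) (G t) < e" using r 3 Gf s \<sigma>0 by simp
      qed (use d in simp)
    qed
  qed
  have LL: "\<exists>m\<in>MF. \<forall>e>0. \<exists>d>0. \<forall>r. t - d < r \<and> r < t \<longrightarrow> dBL (G r) m < e" if t: "t > 0" for t
  proof -
    consider "t \<le> s" | "s < t" "t \<le> s + \<sigma>" | "s + \<sigma> < t" by linarith
    then show ?thesis
    proof cases
      case 1
      obtain m where m: "m \<in> MF" "\<forall>e>0. \<exists>d>0. \<forall>r. t - d < r \<and> r < t \<longrightarrow> dBL (nu r) m < e"
        using cadlagD(3)[OF nu t] by blast
      show ?thesis
      proof (intro bexI[OF _ m(1)] allI impI)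
        fix e :: real assume e: "e > 0"
        obtain d where d: "d > 0" "\<forall>r. t - d < r \<and> r < t \<longrightarrow> dBL (nu r) m < e" using m(2) e by blast
        show "\<exists>d>0. \<forall>r. t - d < r \<and> r < t \<longrightarrow> dBL (G r) m < e"
          using d 1 Gf by (intro exI[of _ d]) auto
      qed
    next
      case 2
      obtain m where m: "m \<in> MF" "\<forall>e>0. \<exists>d>0. \<forall>r. t - s - d < r \<and> r < t - s \<longrightarrow> dBL (mu r) m < e"
        using cadlagD(3)[OF muc, of "t - s"] 2 by auto
      show ?thesis
      proof (intro bexI[OF _ graftM_MF[OF nus m(1)]] allI impI)
        fix e :: real assume e: "e > 0"
        obtain d where d: "d > 0" "\<forall>r. t - s - d < r \<and> r < t - s \<longrightarrow> dBL (mu r) m < e" using m(2) e by blast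
        show "\<exists>d>0. \<forall>r. t - d < r \<and> r < t \<longrightarrow> dBL (G r) (graftM (nu s) m) < e"
        proof (intro exI[of _ "min d (t - s)"] conjI allI impI)
          fix r assume r: "t - min d (t - s) < r \<and> r < t"
          have "dBL (graftM (nu s) (mu (r - s))) (graftM (nu s) m) \<le> dBL (mu (r - s)) m"
            by (rule dBL_graft2[OF nus cadlagD(1)[OF muc] m(1)]) (use r in auto)
          also have "\<dots> < e" using d r by auto
          moreover have "s < r" using r min.cobounded2[of d "t - s"] by linarith
          ultimately show "dBL (G r) (graftM (nu s) m) < e" using r 2 Gf by simp
        qed (use d 2 in simp)
      qed
    next
      case 3
      obtain m where m: "m \<in> MF" "\<forall>e>0. \<exists>d>0. \<forall>r. t - \<sigma> - d < r \<and> r < t - \<sigma> \<longrightarrow> dBL (nu r) m < e"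
        using cadlagD(3)[OF nu, of "t - \<sigma>"] 3 s by auto
      show ?thesis
      proof (intro bexI[OF _ m(1)] allI impI)
        fix e :: real assume e: "e > 0"
        obtain d where d: "d > 0" "\<forall>r. t - \<sigma> - d < r \<and> r < t - \<sigma> \<longrightarrow> dBL (nu r) m < e" using m(2) e by blast
        show "\<exists>d>0. \<forall>r. t - d < r \<and> r < t \<longrightarrow> dBL (G r) m < e"
        proof (intro exI[of _ "min d (t - s - \<sigma>)"] conjI allI impI)
          fix r assume r: "t - min d (t - s - \<sigma>) < r \<and> r < t"
          have "dBL (nu (r - \<sigma>)) m < e" using d r by auto
          moreover have "s + \<sigma> < r" using r min.cobounded2[of d "t - s - \<sigma>"] by linarith
          ultimately show "dBL (G r) m < e" using r 3 Gf s \<sigma>0 by simp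
        qed (use d 3 in simp)
      qed
    qed
  qed
  show ?thesis unfolding G_def[symmetric] cadlag_def using MF RC LL by blast
qed

definition CB :: "real \<Rightarrow> (real \<Rightarrow> real) \<Rightarrow> real set \<Rightarrow> bool" where
  "CB g l I = (\<forall>t s. t \<in> I \<and> s \<in> I \<and> t < s \<longrightarrow> exp (- g) * (s - t) \<le> l s - l t \<and> l s - l t \<le> exp g * (s - t))"

lemma CB_concat1:
  assumes "CB g l {p..q}" "CB g l {q..r}" shows "CB g l {p..r}"
  unfolding CB_def
proof (intro allI impI)
  fix t s :: real assume ts: "t \<in> {p..r} \<and> s \<in> {p..r} \<and> t < s"
  consider "s \<le> q" | "q \<le> t" | "t < q" "q < s" by linarith
  then show "exp (- g) * (s - t) \<le> l s - l t \<and> l s - l t \<le> exp g * (s - t)"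
  proof cases
    case 1 then show ?thesis using assms(1) ts unfolding CB_def by auto
  next
    case 2 then show ?thesis using assms(2) ts unfolding CB_def by auto
  next
    case 3
    have a: "exp (- g) * (q - t) \<le> l q - l t \<and> l q - l t \<le> exp g * (q - t)"
      using assms(1) ts 3 unfolding CB_def by auto
    have b: "exp (- g) * (s - q) \<le> l s - l q \<and> l s - l q \<le> exp g * (s - q)"
      using assms(2) ts 3 unfolding CB_def by auto
    show ?thesis using a b by (simp add: algebra_simps)
  qed
qed

lemma CB_concat2:
  assumes "CB g l {p..q}" "CB g l {q..}" shows "CB g l {p..}"
  unfolding CB_def
proof (intro allI impI)
  fix t s :: real assume ts: "t \<in> {p..} \<and> s \<in> {p..} \<and> t < s"
  consider "s \<le> q" | "q \<le> t" | "t < q" "q < s" by linarith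
  then show "exp (- g) * (s - t) \<le> l s - l t \<and> l s - l t \<le> exp g * (s - t)"
  proof cases
    case 1 then show ?thesis using assms(1) ts unfolding CB_def by auto
  next
    case 2 then show ?thesis using assms(2) ts unfolding CB_def by auto
  next
    case 3
    have a: "exp (- g) * (q - t) \<le> l q - l t \<and> l q - l t \<le> exp g * (q - t)"
      using assms(1) ts 3 unfolding CB_def by auto
    have b: "exp (- g) * (s - q) \<le> l s - l q \<and> l s - l q \<le> exp g * (s - q)"
      using assms(2) ts 3 unfolding CB_def by auto
    show ?thesis using a b by (simp add: algebra_simps)
  qed
qed

lemma abs_ln_le: fixes g q :: real assumes "exp (- g) \<le> q" "q \<le> exp g" shows "\<bar>ln q\<bar> \<le> g"
proof -
  have q: "q > 0" using assms(1) exp_gt_zero[of "-g"] by linarith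
  have "ln q \<le> g" using assms(2) q by (metis exp_le_cancel_iff exp_ln)
  moreover have "- g \<le> ln q" using assms(1) q by (metis exp_le_cancel_iff exp_ln)
  ultimately show ?thesis by linarith
qed

lemma LamSet_from_CB:
  assumes g: "g \<ge> 0" and cb: "CB g l {0..}" and l0: "l 0 = 0"
  shows "l \<in> LamSet" "gammaL l \<le> g"
proof -
  have ch: "exp (- g) * (s - t) \<le> l s - l t \<and> l s - l t \<le> exp g * (s - t)" if "0 \<le> t" "t < s" for t s
    using cb that unfolding CB_def by auto
  have chq: "\<bar>ln ((l s - l t) / (s - t))\<bar> \<le> g" if "0 \<le> t" "t < s" for t s
  proof (rule abs_ln_le)
    show "exp (- g) \<le> (l s - l t) / (s - t)" using ch[OF that] that by (simp add: field_simps)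
    show "(l s - l t) / (s - t) \<le> exp g" using ch[OF that] that by (simp add: field_simps)
  qed
  have sm: "strict_mono_on {0..} l"
  proof (rule strict_mono_onI)
    fix t s :: real assume "t \<in> {0..}" "s \<in> {0..}" "t < s"
    then have "exp (- g) * (s - t) \<le> l s - l t" using ch by auto
    moreover have "exp (- g) * (s - t) > 0" using \<open>t < s\<close> by simp
    ultimately show "l t < l s" by linarith
  qed
  have lip: "continuous_on {0..b} l" for b
  proof -
    have "(exp g)-lipschitz_on {0..b} l"
    proof (rule lipschitz_onI)
      fix x y assume xy: "x \<in> {0..b}" "y \<in> {0..b}"
      show "dist (l x) (l y) \<le> exp g * dist x y"
      proof (cases x y rule: linorder_cases)
        case less
        have h: "exp (-g) * (y - x) \<le> l y - l x \<and> l y - l x \<le> exp g * (y - x)" using ch[of x y] xy less by auto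
        have "0 \<le> exp (-g) * (y - x)" using less by simp
        then have "dist (l x) (l y) = l y - l x" using h by (simp add: dist_real_def)
        moreover have "dist x y = y - x" using less by (simp add: dist_real_def)
        ultimately show ?thesis using h by simp
      next
        case greater
        have h: "exp (-g) * (x - y) \<le> l x - l y \<and> l x - l y \<le> exp g * (x - y)" using ch[of y x] xy greater by auto
        have "0 \<le> exp (-g) * (x - y)" using greater by simp
        then have "dist (l x) (l y) = l x - l y" using h by (simp add: dist_real_def)
        moreover have "dist x y = x - y" using greater by (simp add: dist_real_def)
        ultimately show ?thesis using h by simp
      qed simp
    qed simp
    then show ?thesis by (rule lipschitz_on_continuous_on)
  qed
  have img: "l ` {0..} = {0..}"
  proof
    show "l ` {0..} \<subseteq> {0..}"
    proof
      fix y assume "y \<in> l ` {0..}"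
      then obtain t where t: "t \<ge> 0" "y = l t" by auto
      show "y \<in> {0..}"
      proof (cases "t = 0")
        case False then have "l 0 < l t" using sm t strict_mono_onD by fastforce
        then show ?thesis using t l0 by simp
      qed (use t l0 in simp)
    qed
    show "{0..} \<subseteq> l ` {0..}"
    proof
      fix y :: real assume y: "y \<in> {0..}"
      show "y \<in> l ` {0..}"
      proof (cases "y = 0")
        case True then show ?thesis using l0 by (metis atLeast_iff image_eqI order_refl)
      next
        case False
        then have yp: "y > 0" using y by simp
        have "exp (- g) * (y * exp g - 0) \<le> l (y * exp g) - l 0" using ch[of 0 "y * exp g"] yp by simp
        then have "y \<le> l (y * exp g)" using l0 by (simp add: exp_minus field_simps)
        then obtain x where "0 \<le> x" "x \<le> y * exp g" "l x = y"
          using IVT'[of l 0 y "y * exp g", OF _ _ _ lip] l0 yp by auto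
        then show ?thesis by force
      qed
    qed
  qed
  show "l \<in> LamSet" unfolding LamSet_def using sm img chq by blast
  show "gammaL l \<le> g" unfolding gammaL_def
  proof (rule cSup_least)
    have "(0::real) \<le> 0 \<and> (0::real) < 1" by simp
    then show "{\<bar>ln ((l s - l t) / (s - t))\<bar> |s t. 0 \<le> t \<and> t < s} \<noteq> {}" by blast
  qed (use chq in blast)
qed

lemma LamSet_chord: assumes "l \<in> LamSet" "0 \<le> t" "t < s"
  shows "\<bar>ln ((l s - l t) / (s - t))\<bar> \<le> gammaL l"
  unfolding gammaL_def
proof (rule cSup_upper)
  show "\<bar>ln ((l s - l t) / (s - t))\<bar> \<in> {\<bar>ln ((l s - l t) / (s - t))\<bar> |s t. 0 \<le> t \<and> t < s}" using assms by blast
  obtain C where C: "\<forall>s t. 0 \<le> t \<and> t < s \<longrightarrow> \<bar>ln ((l s - l t) / (s - t))\<bar> \<le> C"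
    using assms(1) unfolding LamSet_def by blast
  show "bdd_above {\<bar>ln ((l s - l t) / (s - t))\<bar> |s t. 0 \<le> t \<and> t < s}"
    by (rule bdd_aboveI[of _ C]) (use C in blast)
qed

lemma LamSet_D: assumes "l \<in> LamSet" shows "strict_mono_on {0..} l" "l ` {0..} = {0..}"
  using assms unfolding LamSet_def by blast+

lemma LamSet_0: assumes "l \<in> LamSet" shows "l 0 = 0"
proof -
  obtain x where x: "x \<ge> 0" "l x = 0" using LamSet_D(2)[OF assms] by (metis atLeast_iff imageE order_refl)
  have "l 0 \<ge> 0" using LamSet_D(2)[OF assms] by auto
  show ?thesis
  proof (cases "x = 0")
    case False
    then have "l 0 < l x" using strict_mono_onD[OF LamSet_D(1)[OF assms], of 0 x] x by simp
    then show ?thesis using x \<open>l 0 \<ge> 0\<close> by simp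
  qed (use x in simp)
qed

lemma LamSet_nonneg: assumes "l \<in> LamSet" "t \<ge> 0" shows "l t \<ge> 0"
  using LamSet_D(2)[OF assms(1)] assms(2) by auto

lemma LamSet_mono: assumes "l \<in> LamSet" "0 \<le> t" "t \<le> s" shows "l t \<le> l s"
proof (cases "t = s")
  case False then show ?thesis using strict_mono_onD[OF LamSet_D(1)[OF assms(1)], of t s] assms by simp
qed simp

lemma LamSet_CB: assumes "l \<in> LamSet" shows "CB (gammaL l) l {0..}"
  unfolding CB_def
proof (intro allI impI)
  fix t s :: real assume ts: "t \<in> {0..} \<and> s \<in> {0..} \<and> t < s"
  define q where "q = (l s - l t) / (s - t)"
  have lt: "l t < l s" using strict_mono_onD[OF LamSet_D(1)[OF assms], of t s] ts by simp
  have q: "q > 0" unfolding q_def using lt ts by simp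
  have a: "\<bar>ln q\<bar> \<le> gammaL l" unfolding q_def by (rule LamSet_chord[OF assms]) (use ts in auto)
  have "q \<le> exp (gammaL l)" using a q by (metis abs_le_D1 exp_le_cancel_iff exp_ln)
  moreover have "exp (- gammaL l) \<le> q" using a q by (metis abs_le_D2 exp_le_cancel_iff exp_ln minus_le_iff)
  ultimately show "exp (- gammaL l) * (s - t) \<le> l s - l t \<and> l s - l t \<le> exp (gammaL l) * (s - t)"
    unfolding q_def using ts by (simp add: field_simps)
qed

lemma gammaL_nonneg: assumes "l \<in> LamSet" shows "0 \<le> gammaL l"
  using LamSet_chord[OF assms, of 0 1] by linarith

lemma LamSet_dev: assumes "l \<in> LamSet" "gammaL l \<le> 1/2" "t \<ge> 0"
  shows "\<bar>l t - t\<bar> \<le> 2 * gammaL l * t"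
proof (cases "t = 0")
  case True then show ?thesis using LamSet_0[OF assms(1)] by simp
next
  case False
  then have t: "t > 0" using assms(3) by simp
  have c: "exp (- gammaL l) * (t - 0) \<le> l t - l 0 \<and> l t - l 0 \<le> exp (gammaL l) * (t - 0)"
  proof -
    have "(0::real) \<in> {0..}" "t \<in> {0..}" "0 < t" using t by auto
    then show ?thesis using LamSet_CB[OF assms(1)] unfolding CB_def by blast
  qed
  have e1: "exp (gammaL l) \<le> 1 + 2 * gammaL l"
    by (rule real_exp_bound_lemma[OF gammaL_nonneg[OF assms(1)] assms(2)])
  have e2: "1 - gammaL l \<le> exp (- gammaL l)" using exp_ge_add_one_self[of "- gammaL l"] by simp
  have "exp (gammaL l) * t \<le> (1 + 2 * gammaL l) * t" by (rule mult_right_mono[OF e1]) (use t in simp)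
  then have "l t \<le> (1 + 2 * gammaL l) * t" using c LamSet_0[OF assms(1)] by simp
  moreover have "(1 - gammaL l) * t \<le> exp (- gammaL l) * t" by (rule mult_right_mono[OF e2]) (use t in simp)
  then have "(1 - gammaL l) * t \<le> l t" using c LamSet_0[OF assms(1)] by simp
  moreover have "0 \<le> gammaL l * t" using gammaL_nonneg[OF assms(1)] t by simp
  ultimately show ?thesis by (simp add: algebra_simps abs_le_iff)
qed

lemma id_LamSet: "(\<lambda>x. x) \<in> LamSet" "gammaL (\<lambda>x. x) \<le> 0"
  using LamSet_from_CB[of 0 "\<lambda>x. x"] unfolding CB_def by auto

lemma exp_int0: "(\<integral>\<^sup>+u. ennreal (indicator {0..} u * exp (- u)) \<partial>lborel) = 1"
proof -
  have "emeasure (density lborel (exponential_density 1)) (space (density lborel (exponential_density 1))) = 1"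
    by (rule prob_space.emeasure_space_1[OF prob_space_exponential_density]) simp
  then have "emeasure (density lborel (exponential_density 1)) UNIV = 1" by simp
  moreover have "emeasure (density lborel (exponential_density 1)) UNIV =
      (\<integral>\<^sup>+u. ennreal (exponential_density 1 u) * indicator UNIV u \<partial>lborel)"
    by (rule emeasure_density) simp_all
  moreover have "(\<lambda>u. ennreal (exponential_density 1 u) * indicator UNIV u) = (\<lambda>u. ennreal (indicator {0..} u * exp (- u)))"
    by (auto simp: exponential_density_def indicator_def)
  ultimately show ?thesis by simp
qed

lemma exp_int_c: "(\<integral>\<^sup>+u. ennreal (indicator {c..} u * exp (- u)) \<partial>lborel) = ennreal (exp (- c))"
proof -
  have m: "(\<lambda>u. ennreal (indicator {c..} u * exp (- u))) \<in> borel_measurable borel" by measurable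
  have "(\<integral>\<^sup>+u. ennreal (indicator {c..} u * exp (- u)) \<partial>lborel) =
     (\<integral>\<^sup>+x. ennreal (indicator {c..} (c + 1 * x) * exp (- (c + 1 * x))) \<partial>lborel)"
    using nn_integral_real_affine[OF m, of 1 c] by simp
  also have "(\<lambda>x. ennreal (indicator {c..} (c + 1 * x) * exp (- (c + 1 * x)))) =
      (\<lambda>x. ennreal (exp (- c)) * ennreal (indicator {0..} x * exp (- x)))"
    by (auto simp: indicator_def exp_diff exp_minus ennreal_mult[symmetric] field_simps)
  also have "(\<integral>\<^sup>+x. ennreal (exp (- c)) * ennreal (indicator {0..} x * exp (- x)) \<partial>lborel) = ennreal (exp (- c))"
    by (subst nn_integral_cmult) (simp_all add: exp_int0)
  finally show ?thesis by simp
qed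

definition dSI :: "(real \<Rightarrow> real measure) \<Rightarrow> (real \<Rightarrow> real measure) \<Rightarrow> (real \<Rightarrow> real) \<Rightarrow> ennreal" where
  "dSI x y l = (\<integral>\<^sup>+ u. indicator {0..} u * ennreal (exp (- u) * dSu x y l u) \<partial>lborel)"

lemma dS_eq: "dS x y = Inf {max (gammaL l) (enn2real (dSI x y l)) | l. l \<in> LamSet}"
  unfolding dS_def dSI_def by simp

lemma dSu_le: assumes "\<And>t. t \<ge> 0 \<Longrightarrow> min 1 (dBL (x (min t u)) (y (min (l t) u))) \<le> c"
  shows "dSu x y l u \<le> c"
  unfolding dSu_def
proof (rule cSup_least)
  have "(0::real) \<le> 0" by simp
  then show "{min 1 (dBL (x (min t u)) (y (min (l t) u))) |t. 0 \<le> t} \<noteq> {}" by blast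
qed (use assms in blast)

lemma dSu_le1: "dSu x y l u \<le> 1"
  by (rule dSu_le) simp

lemma dSu_ge: assumes "t \<ge> 0" shows "min 1 (dBL (x (min t u)) (y (min (l t) u))) \<le> dSu x y l u"
  unfolding dSu_def
proof (rule cSup_upper)
  show "min 1 (dBL (x (min t u)) (y (min (l t) u))) \<in> {min 1 (dBL (x (min t u)) (y (min (l t) u))) |t. 0 \<le> t}"
    using assms by blast
  show "bdd_above {min 1 (dBL (x (min t u)) (y (min (l t) u))) |t. 0 \<le> t}"
    by (rule bdd_aboveI[of _ 1]) auto
qed

lemma dSI_le1: "dSI x y l \<le> 1"
proof -
  have "dSI x y l \<le> (\<integral>\<^sup>+u. ennreal (indicator {0..} u * exp (- u)) \<partial>lborel)"
    unfolding dSI_def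
  proof (rule nn_integral_mono)
    fix u :: real
    have "exp (- u) * dSu x y l u \<le> exp (- u)" using dSu_le1[of x y l u] by simp
    then show "indicator {0..} u * ennreal (exp (- u) * dSu x y l u) \<le> ennreal (indicator {0..} u * exp (- u))"
      by (auto simp: indicator_def ennreal_leI)
  qed
  then show ?thesis using exp_int0 by simp
qed

lemma LamSet_ne: "LamSet \<noteq> {}" using id_LamSet by blast

lemma dS_le: assumes "l \<in> LamSet" shows "dS x y \<le> max (gammaL l) (enn2real (dSI x y l))"
  unfolding dS_eq
proof (rule cInf_lower)
  show "max (gammaL l) (enn2real (dSI x y l)) \<in> {max (gammaL l) (enn2real (dSI x y l)) |l. l \<in> LamSet}"
    using assms by blast
  show "bdd_below {max (gammaL l) (enn2real (dSI x y l)) |l. l \<in> LamSet}"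
  proof (rule bdd_belowI[of _ 0])
    fix v assume "v \<in> {max (gammaL l) (enn2real (dSI x y l)) |l. l \<in> LamSet}"
    then obtain l where "v = max (gammaL l) (enn2real (dSI x y l))" by blast
    then show "0 \<le> v" by (simp add: le_max_iff_disj)
  qed
qed

lemma dS_nonneg: "0 \<le> dS x y"
  unfolding dS_eq
proof (rule cInf_greatest)
  show "{max (gammaL l) (enn2real (dSI x y l)) |l. l \<in> LamSet} \<noteq> {}" using LamSet_ne by blast
  fix v assume "v \<in> {max (gammaL l) (enn2real (dSI x y l)) |l. l \<in> LamSet}"
  then obtain l where "v = max (gammaL l) (enn2real (dSI x y l))" by blast
  then show "0 \<le> v" by (simp add: le_max_iff_disj)
qed

lemma dS_lt: assumes "dS x y < d"
  shows "\<exists>l\<in>LamSet. gammaL l < d \<and> dSI x y l < ennreal d"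
proof -
  have ne: "{max (gammaL l) (enn2real (dSI x y l)) |l. l \<in> LamSet} \<noteq> {}" using LamSet_ne by blast
  obtain v where v: "v \<in> {max (gammaL l) (enn2real (dSI x y l)) |l. l \<in> LamSet}" "v < d"
    using cInf_lessD[OF ne] assms unfolding dS_eq by blast
  then obtain l where l: "l \<in> LamSet" "v = max (gammaL l) (enn2real (dSI x y l))" by blast
  have "dSI x y l < top" using dSI_le1[of x y l] by (rule le_less_trans) simp
  then obtain r where r: "dSI x y l = ennreal r" "r \<ge> 0" by (cases "dSI x y l" rule: ennreal_cases) auto
  have "r < d" using v l r by simp
  then have "dSI x y l < ennreal d" using r by (simp add: ennreal_lessI)
  then show ?thesis using l v by auto
qed

lemma dS_lower:
  fixes x y :: "real \<Rightarrow> real measure" and l :: "real \<Rightarrow> real" and U d t :: real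
  assumes U: "U \<ge> 0" and xz: "\<And>t. t \<ge> U \<Longrightarrow> x t = zeroM" and yz: "\<And>t. t \<ge> U \<Longrightarrow> y t = zeroM"
    and I: "dSI x y l < ennreal d" and t: "t \<ge> 0"
  shows "min 1 (dBL (x t) (y (l t))) \<le> d * exp (U + 1)"
proof -
  define c where "c = min 1 (dBL (x t) (y (l t)))"
  have d: "d > 0" using I by (metis ennreal_less_zero_iff not_gr_zero not_less_zero)
  show ?thesis
  proof (cases "c \<le> 0")
    case True then show ?thesis using d unfolding c_def by (smt (verit) exp_gt_zero mult_pos_pos)
  next
    case False
    have cu: "c \<le> dSu x y l u" if u: "U \<le> u" for u
    proof -
      have "x (min t u) = x t" using xz u by (cases "t \<le> u") (auto simp: min_def)
      moreover have "y (min (l t) u) = y (l t)" using yz u by (cases "l t \<le> u") (auto simp: min_def)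
      ultimately show ?thesis using dSu_ge[OF t, where x=x and y=y and l=l and u=u] unfolding c_def by simp
    qed
    have pw: "ennreal (exp (- (U + 1)) * c) * indicator {U..U+1} u \<le> indicator {0..} u * ennreal (exp (- u) * dSu x y l u)" for u
    proof (cases "u \<in> {U..U+1}")
      case True
      have "exp (- (U + 1)) * c \<le> exp (- u) * dSu x y l u"
        by (rule mult_mono) (use True cu False in auto)
      then show ?thesis using True U by (auto simp: indicator_def ennreal_leI)
    qed simp
    have "ennreal (exp (- (U + 1)) * c) = (\<integral>\<^sup>+u. ennreal (exp (- (U + 1)) * c) * indicator {U..U+1} u \<partial>lborel)"
      by (subst nn_integral_cmult_indicator) simp_all
    also have "\<dots> \<le> dSI x y l" unfolding dSI_def by (rule nn_integral_mono) (rule pw)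
    also have "\<dots> < ennreal d" by (rule I)
    finally have A: "ennreal (exp (- (U + 1)) * c) < ennreal d" .
    have "0 \<le> exp (- (U + 1)) * c" using False by simp
    then have "exp (- (U + 1)) * c < d" using A ennreal_less_iff by blast
    then have B: "(exp (- (U + 1)) * c) * exp (U + 1) < d * exp (U + 1)"
      by (rule mult_strict_right_mono) simp
    have e: "exp (- (U + 1)) * exp (U + 1) = 1" by (simp add: exp_add[symmetric])
    have C: "(exp (- (U + 1)) * c) * exp (U + 1) = c" by (metis e mult.assoc mult.commute mult.left_neutral)
    have "c < d * exp (U + 1)" using B unfolding C .
    then show ?thesis unfolding c_def by simp
  qed
qed

definition oscok :: "(real \<Rightarrow> real measure) \<Rightarrow> real set \<Rightarrow> real \<Rightarrow> real \<Rightarrow> bool" where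
  "oscok Y P b \<epsilon> = (\<forall>x y. 0 \<le> x \<and> x \<le> y \<and> y \<le> b \<and> (\<forall>p\<in>P. \<not> (x < p \<and> p \<le> y)) \<longrightarrow> dBL (Y x) (Y y) < \<epsilon>)"

lemma partition:
  assumes Y: "Y \<in> cadlag" and e: "\<epsilon> > 0" and T: "T \<ge> 0"
  shows "\<exists>P. finite P \<and> oscok Y P T \<epsilon>"
proof -
  define S where "S = {b. 0 \<le> b \<and> b \<le> T \<and> (\<exists>P. finite P \<and> oscok Y P b \<epsilon>)}"
  have "oscok Y {} 0 \<epsilon>" unfolding oscok_def
  proof (intro allI impI)
    fix x y :: real assume "0 \<le> x \<and> x \<le> y \<and> y \<le> 0 \<and> (\<forall>p\<in>{}. \<not> (x < p \<and> p \<le> y))"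
    then have "x = y" by simp
    then show "dBL (Y x) (Y y) < \<epsilon>" using e by simp
  qed
  then have S0: "0 \<in> S" unfolding S_def using T by blast
  have Sne: "S \<noteq> {}" using S0 by blast
  have Sbdd: "bdd_above S" unfolding S_def by (rule bdd_aboveI[of _ T]) auto
  define \<tau> where "\<tau> = Sup S"
  have \<tau>0: "0 \<le> \<tau>" unfolding \<tau>_def by (rule cSup_upper[OF S0 Sbdd])
  have \<tau>T: "\<tau> \<le> T" unfolding \<tau>_def by (rule cSup_least[OF Sne]) (auto simp: S_def)
  have MFY: "\<And>t. t \<ge> 0 \<Longrightarrow> Y t \<in> MF" by (rule cadlagD(1)[OF Y])
  obtain \<delta>' where \<delta>': "\<delta>' > 0" "\<forall>r. \<tau> \<le> r \<and> r < \<tau> + \<delta>' \<longrightarrow> dBL (Y r) (Y \<tau>) < \<epsilon>/2"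
    using cadlagD(2)[OF Y \<tau>0, of "\<epsilon>/2"] e by auto
  have RC2: "dBL (Y x) (Y y) < \<epsilon>" if "\<tau> \<le> x" "x < \<tau> + \<delta>'" "\<tau> \<le> y" "y < \<tau> + \<delta>'" for x y
  proof -
    have "dBL (Y x) (Y y) \<le> dBL (Y x) (Y \<tau>) + dBL (Y \<tau>) (Y y)"
      by (rule dBL_tri) (use that \<tau>0 MFY in auto)
    also have "\<dots> < \<epsilon>/2 + \<epsilon>/2"
    proof -
      have a: "dBL (Y x) (Y \<tau>) < \<epsilon>/2" using \<delta>'(2) that by blast
      have b: "dBL (Y y) (Y \<tau>) < \<epsilon>/2" using \<delta>'(2) that by blast
      show ?thesis using a b dBL_sym[of "Y \<tau>" "Y y"] by linarith
    qed
    finally show ?thesis by simp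
  qed
  define b' where "b' = min T (\<tau> + \<delta>'/2)"
  have b'S: "b' \<in> S"
  proof (cases "\<tau> = 0")
    case True
    have "oscok Y {} b' \<epsilon>" unfolding oscok_def
    proof (intro allI impI)
      fix x y :: real assume xy: "0 \<le> x \<and> x \<le> y \<and> y \<le> b' \<and> (\<forall>p\<in>{}. \<not> (x < p \<and> p \<le> y))"
      have "b' \<le> \<tau> + \<delta>'/2" unfolding b'_def by simp
      then show "dBL (Y x) (Y y) < \<epsilon>" by (intro RC2) (use xy True \<delta>' in auto)
    qed
    then show ?thesis unfolding S_def b'_def using T \<tau>0 \<delta>' by auto
  next
    case False
    then have \<tau>p: "\<tau> > 0" using \<tau>0 by simp
    obtain m where m: "m \<in> MF" "\<forall>e>0. \<exists>d>0. \<forall>r. \<tau> - d < r \<and> r < \<tau> \<longrightarrow> dBL (Y r) m < e"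
      using cadlagD(3)[OF Y \<tau>p] by blast
    obtain \<delta> where \<delta>: "\<delta> > 0" "\<forall>r. \<tau> - \<delta> < r \<and> r < \<tau> \<longrightarrow> dBL (Y r) m < \<epsilon>/2"
      using m(2) e by (meson half_gt_zero)
    have LL2: "dBL (Y x) (Y y) < \<epsilon>" if "\<tau> - \<delta> < x" "x < \<tau>" "\<tau> - \<delta> < y" "y < \<tau>" "0 \<le> x" "0 \<le> y" for x y
    proof -
      have "dBL (Y x) (Y y) \<le> dBL (Y x) m + dBL m (Y y)"
        by (rule dBL_tri) (use that m MFY in auto)
      also have "\<dots> < \<epsilon>/2 + \<epsilon>/2"
      proof -
        have a: "dBL (Y x) m < \<epsilon>/2" using \<delta>(2) that by blast
        have b: "dBL (Y y) m < \<epsilon>/2" using \<delta>(2) that by blast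
        show ?thesis using a b dBL_sym[of m "Y y"] by linarith
      qed
      finally show ?thesis by simp
    qed
    obtain b1 where b1: "b1 \<in> S" "\<tau> - \<delta> < b1"
      using less_cSupD[OF Sne, of "\<tau> - \<delta>"] \<delta>(1) unfolding \<tau>_def[symmetric] by auto
    have b1\<tau>: "b1 \<le> \<tau>" unfolding \<tau>_def by (rule cSup_upper[OF b1(1) Sbdd])
    obtain P1 where P1: "finite P1" "oscok Y P1 b1 \<epsilon>" using b1(1) unfolding S_def by blast
    define P' where "P' = insert b1 (insert \<tau> P1)"
    have "oscok Y P' b' \<epsilon>" unfolding oscok_def
    proof (intro allI impI)
      fix x y :: real assume xy: "0 \<le> x \<and> x \<le> y \<and> y \<le> b' \<and> (\<forall>p\<in>P'. \<not> (x < p \<and> p \<le> y))"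
      show "dBL (Y x) (Y y) < \<epsilon>"
      proof (cases "y \<le> b1")
        case True
        then show ?thesis using P1(2) xy unfolding oscok_def P'_def by blast
      next
        case False
        then have xb1: "b1 \<le> x" using xy unfolding P'_def by force
        show ?thesis
        proof (cases "y < \<tau>")
          case True
          show ?thesis by (rule LL2) (use xb1 b1 True xy in auto)
        next
          case False
          then have "\<tau> \<le> x" using xy unfolding P'_def by force
          moreover have "b' \<le> \<tau> + \<delta>'/2" unfolding b'_def by simp
          ultimately show ?thesis by (intro RC2) (use xy False \<delta>' in auto)
        qed
      qed
    qed
    moreover have "finite P'" unfolding P'_def using P1 by simp
    ultimately show ?thesis unfolding S_def b'_def using T \<tau>0 \<delta>' by auto
  qed
  have "b' \<le> \<tau>" unfolding \<tau>_def by (rule cSup_upper[OF b'S Sbdd])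
  then have "b' = T" unfolding b'_def using \<delta>'(1) \<tau>T by (auto simp: min_def split: if_splits)
  then show ?thesis using b'S unfolding S_def by blast
qed

lemma dS_upper:
  fixes X Y :: "real \<Rightarrow> real measure" and l :: "real \<Rightarrow> real" and \<eta> \<epsilon> T :: real
  assumes XMF: "\<And>t. t \<ge> 0 \<Longrightarrow> X t \<in> MF" and YMF: "\<And>t. t \<ge> 0 \<Longrightarrow> Y t \<in> MF"
    and l: "l \<in> LamSet" and dev: "\<And>t. t \<ge> 0 \<Longrightarrow> \<bar>l t - t\<bar> \<le> \<eta>" and \<eta>: "\<eta> \<ge> 0" and \<epsilon>: "\<epsilon> \<ge> 0"
    and close: "\<And>t. t \<ge> 0 \<Longrightarrow> dBL (X t) (Y (l t)) \<le> \<epsilon>"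
    and P: "finite P" and osc: "oscok Y P T \<epsilon>"
  shows "dS X Y \<le> max (gammaL l) (2 * \<epsilon> + 2 * \<eta> * card P + exp (- (T - \<eta>)))"
proof -
  define good where "good u \<longleftrightarrow> u + \<eta> \<le> T \<and> (\<forall>p\<in>P. p \<le> u - \<eta> \<or> u + \<eta> < p)" for u
  have W: "dBL (Y a) (Y b) < \<epsilon>" if u: "u \<ge> 0" "good u" and ab: "u - \<eta> \<le> a" "a \<le> u + \<eta>" "u - \<eta> \<le> b" "b \<le> u + \<eta>"
      "0 \<le> a" "0 \<le> b" for u a b
  proof -
    have W1: "dBL (Y a) (Y b) < \<epsilon>" if "u - \<eta> \<le> a" "a \<le> b" "b \<le> u + \<eta>" "0 \<le> a" for a b
    proof -
      have "\<forall>p\<in>P. \<not> (a < p \<and> p \<le> b)" using u(2) that unfolding good_def by force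
      moreover have "b \<le> T" using u(2) that unfolding good_def by linarith
      ultimately show ?thesis using osc that unfolding oscok_def by blast
    qed
    show ?thesis
    proof (cases "a \<le> b")
      case True then show ?thesis using W1 ab by blast
    next
      case False then show ?thesis using W1[of b a] ab dBL_sym[of "Y a" "Y b"] by simp
    qed
  qed
  have lmono: "\<And>a b. 0 \<le> a \<Longrightarrow> a \<le> b \<Longrightarrow> l a \<le> l b" using LamSet_mono[OF l] by blast
  have lnn: "\<And>a. 0 \<le> a \<Longrightarrow> 0 \<le> l a" using LamSet_nonneg[OF l] by blast
  have devL: "\<And>a. 0 \<le> a \<Longrightarrow> a - \<eta> \<le> l a \<and> l a \<le> a + \<eta>" using dev by (simp add: abs_le_iff) (smt (verit))
  have goodB: "dSu X Y l u \<le> 2 * \<epsilon>" if u: "u \<ge> 0" "good u" for u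
  proof (rule dSu_le)
    fix t :: real assume t: "t \<ge> 0"
    have "dBL (X (min t u)) (Y (min (l t) u)) \<le> 2 * \<epsilon>"
    proof -
      consider "t \<le> u" "l t \<le> u" | "t \<le> u" "u < l t" | "u < t" "l t \<le> u" | "u < t" "u < l t" by linarith
      then show ?thesis
      proof cases
        case 1 then show ?thesis using close[OF t] \<epsilon> by (simp add: min_def)
      next
        case 2
        have "dBL (X t) (Y u) \<le> dBL (X t) (Y (l t)) + dBL (Y (l t)) (Y u)"
          by (rule dBL_tri) (use t u lnn XMF YMF in auto)
        also have "dBL (Y (l t)) (Y u) < \<epsilon>" by (rule W[OF u]) (use 2 devL[OF t] t u \<eta> in auto)
        finally show ?thesis using 2 close[OF t] by (simp add: min_def)
      next
        case 3
        have "dBL (X u) (Y (l t)) \<le> dBL (X u) (Y (l u)) + dBL (Y (l u)) (Y (l t))"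
          by (rule dBL_tri) (use t u lnn XMF YMF in auto)
        also have "dBL (Y (l u)) (Y (l t)) < \<epsilon>"
          by (rule W[OF u]) (use 3 devL[OF t] devL[OF u(1)] lmono[OF u(1), of t] lnn[OF u(1)] lnn[OF t] in auto)
        finally show ?thesis using 3 close[OF u(1)] by (simp add: min_def)
      next
        case 4
        have "dBL (X u) (Y u) \<le> dBL (X u) (Y (l u)) + dBL (Y (l u)) (Y u)"
          by (rule dBL_tri) (use t u lnn XMF YMF in auto)
        also have "dBL (Y (l u)) (Y u) < \<epsilon>" by (rule W[OF u]) (use devL[OF u(1)] lnn[OF u(1)] u \<eta> in auto)
        finally show ?thesis using 4 close[OF u(1)] by (simp add: min_def)
      qed
    qed
    then show "min 1 (dBL (X (min t u)) (Y (min (l t) u))) \<le> 2 * \<epsilon>" by linarith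
  qed
  define G where "G u = ennreal (indicator {0..} u * exp (- u) * (2 * \<epsilon>)) + (\<Sum>p\<in>P. ennreal (indicator {p - \<eta>..p + \<eta>} u))
      + ennreal (indicator {T - \<eta>..} u * exp (- u))" for u
  have pw: "indicator {0..} u * ennreal (exp (- u) * dSu X Y l u) \<le> G u" for u
  proof (cases "u \<ge> 0")
    case False then show ?thesis by (simp add: indicator_def)
  next
    case u0: True
    have L: "indicator {0..} u * ennreal (exp (- u) * dSu X Y l u) = ennreal (exp (- u) * dSu X Y l u)"
      using u0 by (simp add: indicator_def)
    have e1: "exp (- u) \<le> 1" using u0 by simp
    have d1: "exp (- u) * dSu X Y l u \<le> exp (- u)" using dSu_le1[of X Y l u] by simp
    show ?thesis
    proof (cases "good u")
      case True
      have "exp (- u) * dSu X Y l u \<le> exp (- u) * (2 * \<epsilon>)"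
        by (rule mult_left_mono[OF goodB[OF u0 True]]) simp
      then have "ennreal (exp (- u) * dSu X Y l u) \<le> ennreal (indicator {0..} u * exp (- u) * (2 * \<epsilon>))"
        using u0 by (simp add: indicator_def ennreal_leI)
      also have "\<dots> \<le> G u" unfolding G_def by (simp add: add.assoc add_increasing2)
      finally show ?thesis using L by simp
    next
      case False
      then consider "T < u + \<eta>" | p where "p \<in> P" "u - \<eta> < p" "p \<le> u + \<eta>" unfolding good_def by force
      then show ?thesis
      proof cases
        case 1
        have "ennreal (exp (- u) * dSu X Y l u) \<le> ennreal (indicator {T - \<eta>..} u * exp (- u))"
          using 1 d1 by (simp add: indicator_def ennreal_leI)
        also have "\<dots> \<le> G u" unfolding G_def by (simp add: add_increasing)
        finally show ?thesis using L by simp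
      next
        case 2
        have "ennreal (exp (- u) * dSu X Y l u) \<le> ennreal (indicator {p - \<eta>..p + \<eta>} u)"
        proof -
          have "exp (- u) * dSu X Y l u \<le> 1" using d1 e1 by linarith
          then show ?thesis using 2 by (simp add: indicator_def ennreal_leI)
        qed
        also have "\<dots> \<le> (\<Sum>p\<in>P. ennreal (indicator {p - \<eta>..p + \<eta>} u))"
          by (rule member_le_sum[OF 2(1)]) (simp_all add: P)
        also have "\<dots> \<le> G u" unfolding G_def by (simp add: add_increasing add_increasing2)
        finally show ?thesis using L by simp
      qed
    qed
  qed
  have m1: "(\<lambda>u. ennreal (indicator {0..} u * exp (- u) * (2 * \<epsilon>))) \<in> borel_measurable lborel" by measurable
  have m2: "(\<lambda>u. \<Sum>p\<in>P. ennreal (indicator {p - \<eta>..p + \<eta>} u)) \<in> borel_measurable lborel" by measurable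
  have m3: "(\<lambda>u. ennreal (indicator {T - \<eta>..} u * exp (- u))) \<in> borel_measurable lborel" by measurable
  have i1: "(\<integral>\<^sup>+u. ennreal (indicator {0..} u * exp (- u) * (2 * \<epsilon>)) \<partial>lborel) = ennreal (2 * \<epsilon>)"
  proof -
    have "(\<lambda>u. ennreal (indicator {0..} u * exp (- u) * (2 * \<epsilon>))) = (\<lambda>u. ennreal (2 * \<epsilon>) * ennreal (indicator {0..} u * exp (- u)))"
      using \<epsilon> by (auto simp: ennreal_mult[symmetric] mult.commute intro!: ext)
    then show ?thesis by (simp add: nn_integral_cmult exp_int0)
  qed
  have i2: "(\<integral>\<^sup>+u. (\<Sum>p\<in>P. ennreal (indicator {p - \<eta>..p + \<eta>} u)) \<partial>lborel) = ennreal (2 * \<eta> * card P)"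
  proof -
    have "(\<integral>\<^sup>+u. (\<Sum>p\<in>P. ennreal (indicator {p - \<eta>..p + \<eta>} u)) \<partial>lborel) = (\<Sum>p\<in>P. (\<integral>\<^sup>+u. ennreal (indicator {p - \<eta>..p + \<eta>} u) \<partial>lborel))"
      by (rule nn_integral_sum) measurable
    also have "\<dots> = (\<Sum>p\<in>P. ennreal (2 * \<eta>))"
    proof (rule sum.cong[OF refl])
      fix p assume "p \<in> P"
      have "(\<integral>\<^sup>+u. ennreal (indicator {p - \<eta>..p + \<eta>} u) \<partial>lborel) = emeasure lborel {p - \<eta>..p + \<eta>}"
        unfolding ennreal_indicator by (rule nn_integral_indicator) simp
      also have "\<dots> = ennreal (2 * \<eta>)" using \<eta> by simp
      finally show "(\<integral>\<^sup>+u. ennreal (indicator {p - \<eta>..p + \<eta>} u) \<partial>lborel) = ennreal (2 * \<eta>)" .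
    qed
    also have "\<dots> = ennreal (2 * \<eta> * card P)" using \<eta> by (simp add: ennreal_mult' mult.commute ennreal_of_nat_eq_real_of_nat)
    finally show ?thesis .
  qed
  have i3: "(\<integral>\<^sup>+u. ennreal (indicator {T - \<eta>..} u * exp (- u)) \<partial>lborel) = ennreal (exp (- (T - \<eta>)))"
    by (rule exp_int_c)
  have "dSI X Y l \<le> (\<integral>\<^sup>+u. G u \<partial>lborel)" unfolding dSI_def by (rule nn_integral_mono) (rule pw)
  also have "(\<integral>\<^sup>+u. G u \<partial>lborel) = ennreal (2 * \<epsilon>) + ennreal (2 * \<eta> * card P) + ennreal (exp (- (T - \<eta>)))"
  proof -
    have "(\<integral>\<^sup>+u. G u \<partial>lborel) = (\<integral>\<^sup>+u. ennreal (indicator {0..} u * exp (- u) * (2 * \<epsilon>)) + (\<Sum>p\<in>P. ennreal (indicator {p - \<eta>..p + \<eta>} u)) \<partial>lborel)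
        + (\<integral>\<^sup>+u. ennreal (indicator {T - \<eta>..} u * exp (- u)) \<partial>lborel)"
      unfolding G_def by (rule nn_integral_add) (use m1 m2 m3 in auto)
    also have "(\<integral>\<^sup>+u. ennreal (indicator {0..} u * exp (- u) * (2 * \<epsilon>)) + (\<Sum>p\<in>P. ennreal (indicator {p - \<eta>..p + \<eta>} u)) \<partial>lborel)
       = (\<integral>\<^sup>+u. ennreal (indicator {0..} u * exp (- u) * (2 * \<epsilon>)) \<partial>lborel) + (\<integral>\<^sup>+u. (\<Sum>p\<in>P. ennreal (indicator {p - \<eta>..p + \<eta>} u)) \<partial>lborel)"
      by (rule nn_integral_add) (use m1 m2 in auto)
    finally show ?thesis unfolding i1 i2 i3 .
  qed
  also have "\<dots> = ennreal (2 * \<epsilon> + 2 * \<eta> * card P + exp (- (T - \<eta>)))"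
    using \<epsilon> \<eta> by (simp add: ennreal_plus)
  finally have "enn2real (dSI X Y l) \<le> 2 * \<epsilon> + 2 * \<eta> * card P + exp (- (T - \<eta>))"
    by (rule enn2real_leI[rotated]) (use \<epsilon> \<eta> in simp)
  then show ?thesis using dS_le[OF l, of X Y] by linarith
qed

definition Lam :: "(real \<Rightarrow> real) \<Rightarrow> real \<Rightarrow> real \<Rightarrow> real \<Rightarrow> real \<Rightarrow> real \<Rightarrow> real \<Rightarrow> real" where
  "Lam l s a \<sigma>' \<sigma> \<kappa> t = (if t \<le> s then t else if t \<le> s + a then s + l (t - s)
     else if t \<le> s + \<sigma>' + \<kappa> then s + l a + (t - s - a) * ((\<sigma> + \<kappa> - l a) / (\<sigma>' + \<kappa> - a))
     else t + \<sigma> - \<sigma>')"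

context
  fixes l :: "real \<Rightarrow> real" and s a \<sigma>' \<sigma> \<kappa> :: real
  assumes l0: "l 0 = 0" and s: "s \<ge> 0" and a: "0 \<le> a" "a \<le> \<sigma>'" and \<kappa>: "\<kappa> > 0"
begin

definition "cc = (\<sigma> + \<kappa> - l a) / (\<sigma>' + \<kappa> - a)"

lemma D_pos: "\<sigma>' + \<kappa> - a > 0" using a \<kappa> by simp

lemma Lam1: "t \<le> s \<Longrightarrow> Lam l s a \<sigma>' \<sigma> \<kappa> t = t"
  unfolding Lam_def by simp

lemma Lam2: "s \<le> t \<Longrightarrow> t \<le> s + a \<Longrightarrow> Lam l s a \<sigma>' \<sigma> \<kappa> t = s + l (t - s)"
  unfolding Lam_def using l0 by auto

lemma Lam3: "s + a \<le> t \<Longrightarrow> t \<le> s + \<sigma>' + \<kappa> \<Longrightarrow> Lam l s a \<sigma>' \<sigma> \<kappa> t = s + l a + (t - s - a) * cc"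
  unfolding Lam_def cc_def using l0 a by auto

lemma Lam4: "s + \<sigma>' + \<kappa> \<le> t \<Longrightarrow> Lam l s a \<sigma>' \<sigma> \<kappa> t = t + \<sigma> - \<sigma>'"
proof -
  assume t: "s + \<sigma>' + \<kappa> \<le> t"
  show ?thesis
  proof (cases "t = s + \<sigma>' + \<kappa>")
    case True
    have "Lam l s a \<sigma>' \<sigma> \<kappa> t = s + l a + (t - s - a) * cc" by (rule Lam3) (use True a \<kappa> in auto)
    also have "(t - s - a) * cc = \<sigma> + \<kappa> - l a" unfolding cc_def using True D_pos by simp
    finally show ?thesis using True by simp
  next
    case False
    then show ?thesis unfolding Lam_def using t a \<kappa> s by auto
  qed
qed

lemma Lam0: "Lam l s a \<sigma>' \<sigma> \<kappa> 0 = 0" using Lam1 s by simp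

lemma Lam_CB:
  assumes lL: "l \<in> LamSet" and g: "gammaL l \<le> g" and c1: "exp (- g) \<le> cc" and c2: "cc \<le> exp g"
  shows "CB g (Lam l s a \<sigma>' \<sigma> \<kappa>) {0..}"
proof -
  let ?L = "Lam l s a \<sigma>' \<sigma> \<kappa>"
  have g0: "g \<ge> 0" using g gammaL_nonneg[OF lL] by simp
  have e1: "exp (- g) \<le> 1" "1 \<le> exp g" using g0 by auto
  have p1: "CB g ?L {0..s}" unfolding CB_def
  proof (intro allI impI)
    fix t t' :: real assume tt: "t \<in> {0..s} \<and> t' \<in> {0..s} \<and> t < t'"
    then have "?L t' - ?L t = t' - t" using Lam1 by simp
    then show "exp (- g) * (t' - t) \<le> ?L t' - ?L t \<and> ?L t' - ?L t \<le> exp g * (t' - t)"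
      using tt e1 by (simp add: mult_left_le_one_le)
  qed
  have p2: "CB g ?L {s..s+a}" unfolding CB_def
  proof (intro allI impI)
    fix t t' :: real assume tt: "t \<in> {s..s+a} \<and> t' \<in> {s..s+a} \<and> t < t'"
    then have "?L t' - ?L t = l (t' - s) - l (t - s)" using Lam2 by simp
    moreover have "exp (- gammaL l) * ((t' - s) - (t - s)) \<le> l (t' - s) - l (t - s) \<and>
        l (t' - s) - l (t - s) \<le> exp (gammaL l) * ((t' - s) - (t - s))"
    proof -
      have i: "(t - s) \<in> {0..} \<and> (t' - s) \<in> {0..} \<and> t - s < t' - s" using tt by auto
      show ?thesis using LamSet_CB[OF lL] i unfolding CB_def by blast
    qed
    moreover have "exp (- g) * (t' - t) \<le> exp (- gammaL l) * (t' - t)"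
      by (rule mult_right_mono) (use g tt in auto)
    moreover have "exp (gammaL l) * (t' - t) \<le> exp g * (t' - t)"
      by (rule mult_right_mono) (use g tt in auto)
    ultimately show "exp (- g) * (t' - t) \<le> ?L t' - ?L t \<and> ?L t' - ?L t \<le> exp g * (t' - t)"
      by simp
  qed
  have p3: "CB g ?L {s+a..s+\<sigma>'+\<kappa>}" unfolding CB_def
  proof (intro allI impI)
    fix t t' :: real assume tt: "t \<in> {s+a..s+\<sigma>'+\<kappa>} \<and> t' \<in> {s+a..s+\<sigma>'+\<kappa>} \<and> t < t'"
    then have "?L t' = s + l a + (t' - s - a) * cc" "?L t = s + l a + (t - s - a) * cc" using Lam3 by auto
    then have "?L t' - ?L t = cc * (t' - t)" by (simp add: algebra_simps)
    moreover have "exp (- g) * (t' - t) \<le> cc * (t' - t)" by (rule mult_right_mono) (use c1 tt in auto)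
    moreover have "cc * (t' - t) \<le> exp g * (t' - t)" by (rule mult_right_mono) (use c2 tt in auto)
    ultimately show "exp (- g) * (t' - t) \<le> ?L t' - ?L t \<and> ?L t' - ?L t \<le> exp g * (t' - t)"
      by simp
  qed
  have p4: "CB g ?L {s+\<sigma>'+\<kappa>..}" unfolding CB_def
  proof (intro allI impI)
    fix t t' :: real assume tt: "t \<in> {s+\<sigma>'+\<kappa>..} \<and> t' \<in> {s+\<sigma>'+\<kappa>..} \<and> t < t'"
    then have "?L t' - ?L t = t' - t" using Lam4 by simp
    then show "exp (- g) * (t' - t) \<le> ?L t' - ?L t \<and> ?L t' - ?L t \<le> exp g * (t' - t)"
      using tt e1 by (simp add: mult_left_le_one_le)
  qed
  have "CB g ?L {0..s+a}" by (rule CB_concat1[OF p1 p2])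
  then have "CB g ?L {0..s+\<sigma>'+\<kappa>}" by (rule CB_concat1[OF _ p3])
  then show ?thesis by (rule CB_concat2[OF _ p4])
qed

lemma Lam_dev:
  assumes dv: "\<And>r. 0 \<le> r \<Longrightarrow> r \<le> a \<Longrightarrow> \<bar>l r - r\<bar> \<le> \<delta>" and ds: "\<bar>\<sigma> - \<sigma>'\<bar> \<le> \<delta>" and t: "t \<ge> 0"
  shows "\<bar>Lam l s a \<sigma>' \<sigma> \<kappa> t - t\<bar> \<le> \<delta>"
proof -
  have \<delta>: "\<delta> \<ge> 0" using ds by linarith
  consider "t \<le> s" | "s \<le> t" "t \<le> s + a" | "s + a \<le> t" "t \<le> s + \<sigma>' + \<kappa>" | "s + \<sigma>' + \<kappa> \<le> t" by linarith
  then show ?thesis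
  proof cases
    case 1 then show ?thesis using Lam1 \<delta> by simp
  next
    case 2 then show ?thesis using Lam2 dv[of "t - s"] by simp
  next
    case 3
    define D where "D = \<sigma>' + \<kappa> - a"
    have D: "D > 0" unfolding D_def using D_pos .
    define \<theta> where "\<theta> = (t - s - a) / D"
    have \<theta>: "0 \<le> \<theta>" "\<theta> \<le> 1" unfolding \<theta>_def using 3 D by (auto simp: D_def field_simps)
    have h1: "(t - s - a) * cc = \<theta> * (\<sigma> + \<kappa> - l a)" unfolding \<theta>_def cc_def D_def by simp
    have h2: "t - s - a = \<theta> * D" using D unfolding \<theta>_def by simp
    have "Lam l s a \<sigma>' \<sigma> \<kappa> t - t = s + l a + \<theta> * (\<sigma> + \<kappa> - l a) - t" using Lam3[OF 3] h1 by simp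
    also have "\<dots> = (l a - a) + \<theta> * (\<sigma> + \<kappa> - l a) - (t - s - a)" by simp
    also have "\<dots> = (l a - a) + \<theta> * (\<sigma> + \<kappa> - l a) - \<theta> * D" using h2 by simp
    also have "\<dots> = (1 - \<theta>) * (l a - a) + \<theta> * (\<sigma> - \<sigma>')" unfolding D_def by (simp add: algebra_simps)
    finally have "Lam l s a \<sigma>' \<sigma> \<kappa> t - t = (1 - \<theta>) * (l a - a) + \<theta> * (\<sigma> - \<sigma>')" .
    also have "\<bar>\<dots>\<bar> \<le> (1 - \<theta>) * \<bar>l a - a\<bar> + \<theta> * \<bar>\<sigma> - \<sigma>'\<bar>"
      using \<theta> by (metis abs_mult abs_of_nonneg abs_triangle_ineq diff_ge_0_iff_ge)
    also have "\<dots> \<le> (1 - \<theta>) * \<delta> + \<theta> * \<delta>"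
      using dv[of a] a ds \<theta> by (intro add_mono mult_left_mono) auto
    finally show ?thesis by (simp add: algebra_simps)
  next
    case 4 then show ?thesis using Lam4 ds by simp
  qed
qed

end

lemma min1_le: "min 1 (x::real) \<le> b \<Longrightarrow> b < 1 \<Longrightarrow> x \<le> b"
  by (simp add: min_def split: if_splits)

lemma main_cont:
  assumes nu: "nu \<in> cadlag" and s: "s > 0" and nt: "\<not> (deadset nu \<noteq> {} \<and> lifetime nu \<le> s)"
    and mu: "mu \<in> D0" and e: "e > 0"
  shows "\<exists>d>0. \<forall>mu'\<in>D0. d0 mu' mu < d \<longrightarrow> dS (graft nu s mu') (graft nu s mu) < e"
proof -
  define Y where "Y = graft nu s mu"
  define \<sigma> where "\<sigma> = lifetime mu"
  have \<sigma>0: "\<sigma> \<ge> 0" unfolding \<sigma>_def by (rule lifetime_nonneg[OF D0D(2)[OF mu]])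
  have Ycad: "Y \<in> cadlag" unfolding Y_def using graft_cadlag[OF nu _ mu nt] s by simp
  have Yf: "\<And>t. Y t = (if t < s then nu t else if t < s + \<sigma> then graftM (nu s) (mu (t - s)) else nu (t - \<sigma>))"
    unfolding Y_def \<sigma>_def by (rule graft_eq[OF nt])
  have YMF: "\<And>t. t \<ge> 0 \<Longrightarrow> Y t \<in> MF" by (rule cadlagD(1)[OF Ycad])
  have nusMF: "nu s \<in> MF" using cadlagD(1)[OF nu] s by simp
  have muMF: "\<And>t. t \<ge> 0 \<Longrightarrow> mu t \<in> MF" by (rule cadlagD(1)[OF D0D(1)[OF mu]])
  define g where "g = e/2"
  have g: "g > 0" "g < e" unfolding g_def using e by auto
  define \<epsilon> where "\<epsilon> = e/16"
  have \<epsilon>: "\<epsilon> > 0" unfolding \<epsilon>_def using e by simp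
  define \<epsilon>4 where "\<epsilon>4 = \<epsilon>/4"
  have \<epsilon>4: "\<epsilon>4 > 0" unfolding \<epsilon>4_def using \<epsilon> by simp
  define T where "T = 1 + max 0 (ln (8/e))"
  have T: "T \<ge> 0" unfolding T_def by simp
  obtain P where P: "finite P" "oscok Y P T \<epsilon>" using partition[OF Ycad \<epsilon> T] by blast
  define \<eta> where "\<eta> = min 1 (e / (16 * (real (card P) + 1)))"
  have \<eta>: "0 < \<eta>" "\<eta> \<le> 1" unfolding \<eta>_def using e by auto
  have bound: "2 * \<epsilon> + 2 * \<eta> * card P + exp (- (T - \<eta>)) < e"
  proof -
    have b1: "2 * \<epsilon> = e/8" unfolding \<epsilon>_def by simp
    have "\<eta> * card P \<le> e / (16 * (real (card P) + 1)) * card P"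
      by (rule mult_right_mono) (auto simp: \<eta>_def)
    also have "\<dots> \<le> e / 16"
      using e by (simp add: field_simps)
    finally have b2: "2 * \<eta> * card P \<le> e/8" by simp
    have "exp (- (T - \<eta>)) \<le> exp (- (T - 1))" using \<eta> by simp
    also have "exp (- (T - 1)) \<le> e/8"
    proof (cases "ln (8/e) \<ge> 0")
      case True
      then have "exp (- (T - 1)) = exp (- ln (8/e))" unfolding T_def by simp
      also have "\<dots> = e/8" using e by (simp add: exp_minus)
      finally show ?thesis by simp
    next
      case False
      then have "8/e < 1" using e by (simp add: ln_less_zero_iff)
      then have "e > 8" using e by (simp add: field_simps)
      moreover have "exp (- (T - 1)) = 1" unfolding T_def using False by simp
      ultimately show ?thesis by simp
    qed
    finally show ?thesis using b1 b2 e by linarith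
  qed
  obtain \<rho> where \<rho>: "\<rho> > 0" "\<forall>r\<ge>0. r > \<sigma> - \<rho> \<longrightarrow> dBL (mu r) zeroM < \<epsilon>4"
    using end_small[OF mu \<epsilon>4] unfolding \<sigma>_def by blast
  obtain \<kappa>0 where \<kappa>0: "\<kappa>0 > 0" "\<forall>r. s \<le> r \<and> r < s + \<kappa>0 \<longrightarrow> dBL (nu r) (nu s) < \<epsilon>4"
    using cadlagD(2)[OF nu _ \<epsilon>4, of s] s by auto
  define \<kappa> where "\<kappa> = \<kappa>0/2"
  have \<kappa>: "\<kappa> > 0" "\<kappa> < \<kappa>0" unfolding \<kappa>_def using \<kappa>0 by auto
  define \<theta> where "\<theta> = min (1 - exp (-g)) (exp g - 1)"
  have \<theta>: "\<theta> > 0" unfolding \<theta>_def using g by auto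
  define K where "K = 2 * \<sigma> + 3"
  have K: "K \<ge> 3" unfolding K_def using \<sigma>0 by simp
  define d where "d = min (1/2) (min g (min (\<rho>/2/K) (min (\<theta>*\<kappa>/K) (min (\<eta>/K) (min \<epsilon>4 (1/2) / exp (\<sigma>+3))))))"
  have d0: "d > 0" unfolding d_def using g \<rho> \<theta> \<kappa> \<eta> \<epsilon>4 K by auto
  have d1: "d \<le> 1/2" "d \<le> g" unfolding d_def by (rule min.cobounded1, rule min.coboundedI2, rule min.cobounded1)
  have dK: "d * K \<le> \<rho>/2" "d * K \<le> \<theta> * \<kappa>" "d * K \<le> \<eta>"
  proof -
    have "d \<le> \<rho>/2/K" "d \<le> \<theta>*\<kappa>/K" "d \<le> \<eta>/K" unfolding d_def by (simp_all add: min_le_iff_disj)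
    then show "d * K \<le> \<rho>/2" "d * K \<le> \<theta> * \<kappa>" "d * K \<le> \<eta>" using K by (auto simp: field_simps)
  qed
  have dexp: "d * exp (\<sigma> + 3) \<le> min \<epsilon>4 (1/2)"
  proof -
    have "d \<le> min \<epsilon>4 (1/2) / exp (\<sigma>+3)" unfolding d_def by (simp only: min_le_iff_disj order_refl simp_thms)
    then show ?thesis by (simp add: field_simps)
  qed
  show ?thesis
  proof (intro exI[of _ d] conjI ballI impI)
    show "d > 0" by (rule d0)
    fix mu' assume mu': "mu' \<in> D0" and dd: "d0 mu' mu < d"
    define \<sigma>' where "\<sigma>' = lifetime mu'"
    have \<sigma>'0: "\<sigma>' \<ge> 0" unfolding \<sigma>'_def by (rule lifetime_nonneg[OF D0D(2)[OF mu']])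
    have dSlt: "dS mu' mu < d" and \<sigma>d: "\<bar>\<sigma>' - \<sigma>\<bar> < d"
      using dd dS_nonneg[of mu' mu] unfolding d0_def \<sigma>_def \<sigma>'_def by linarith+
    obtain l where l: "l \<in> LamSet" "gammaL l < d" "dSI mu' mu l < ennreal d" using dS_lt[OF dSlt] by blast
    have \<gamma>: "0 \<le> gammaL l" "gammaL l \<le> 1/2" using gammaL_nonneg[OF l(1)] l(2) d1 by auto
    have l0: "l 0 = 0" by (rule LamSet_0[OF l(1)])
    have lmono: "\<And>a b. 0 \<le> a \<Longrightarrow> a \<le> b \<Longrightarrow> l a \<le> l b" using LamSet_mono[OF l(1)] by blast
    have lnn: "\<And>a. 0 \<le> a \<Longrightarrow> 0 \<le> l a" using LamSet_nonneg[OF l(1)] by blast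
    have mu'MF: "\<And>t. t \<ge> 0 \<Longrightarrow> mu' t \<in> MF" by (rule cadlagD(1)[OF D0D(1)[OF mu']])
    define U where "U = max \<sigma> \<sigma>' + 1"
    have src: "dBL (mu' r) (mu (l r)) \<le> \<epsilon>4" if r: "r \<ge> 0" for r
    proof -
      have U0: "U \<ge> 0" unfolding U_def using \<sigma>0 by simp
      have z1: "mu' t = zeroM" if "t \<ge> U" for t
        by (rule dead_zero[OF D0D(2)[OF mu']]) (use that in \<open>simp add: U_def \<sigma>'_def\<close>)
      have z2: "mu t = zeroM" if "t \<ge> U" for t
        by (rule dead_zero[OF D0D(2)[OF mu]]) (use that in \<open>simp add: U_def \<sigma>_def\<close>)
      have "min 1 (dBL (mu' r) (mu (l r))) \<le> d * exp (U + 1)" by (rule dS_lower[OF U0 z1 z2 l(3) r])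
      also have "\<dots> \<le> d * exp (\<sigma> + 3)"
        using \<sigma>d d1 d0 unfolding U_def by (intro mult_left_mono) (auto simp: max_def)
      also have "\<dots> \<le> min \<epsilon>4 (1/2)" by (rule dexp)
      finally have "min 1 (dBL (mu' r) (mu (l r))) \<le> min \<epsilon>4 (1/2)" .
      then show ?thesis using min1_le[of "dBL (mu' r) (mu (l r))" "min \<epsilon>4 (1/2)"] by linarith
    qed
    have ldev: "\<bar>l r - r\<bar> \<le> 2 * d * r" if "r \<ge> 0" for r
    proof -
      have "\<bar>l r - r\<bar> \<le> 2 * gammaL l * r" by (rule LamSet_dev[OF l(1) \<gamma>(2) that])
      also have "\<dots> \<le> 2 * d * r" using l(2) that by (intro mult_right_mono) auto
      finally show ?thesis .
    qed
    define a where "a = max 0 (\<sigma>' - \<rho>/2)"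
    have a: "0 \<le> a" "a \<le> \<sigma>'" "a \<le> \<sigma> + 1" unfolding a_def using \<sigma>'0 \<rho> \<sigma>d d1 by auto
    have la: "\<bar>l a - a\<bar> \<le> 2 * d * (\<sigma> + 1)"
      using ldev[OF a(1)] mult_left_mono[OF a(3), of "2*d"] d0 by linarith
    have C1: "l a < \<sigma>" if "a > 0"
    proof -
      have "a = \<sigma>' - \<rho>/2" using that unfolding a_def by simp
      then show ?thesis using la \<sigma>d dK(1) unfolding K_def by (simp add: abs_le_iff algebra_simps) linarith
    qed
    have C2: "\<sigma> - \<rho> < l a"
    proof (cases "a > 0")
      case True
      then have "a = \<sigma>' - \<rho>/2" unfolding a_def by simp
      then show ?thesis using la \<sigma>d dK(1) \<rho> unfolding K_def by (simp add: abs_le_iff algebra_simps) linarith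
    next
      case False
      then have "a = 0" "\<sigma>' \<le> \<rho>/2" using a(1) unfolding a_def by auto
      then show ?thesis using l0 \<sigma>d dK(1) K d0 \<rho> by (simp add: abs_less_iff) (smt (verit) mult_le_cancel_left1)
    qed
    define D where "D = \<sigma>' + \<kappa> - a"
    define N where "N = \<sigma> + \<kappa> - l a"
    have D: "D \<ge> \<kappa>" unfolding D_def using a by simp
    have ND: "\<bar>N - D\<bar> \<le> \<theta> * D"
    proof -
      have "\<bar>N - D\<bar> = \<bar>(\<sigma> - \<sigma>') - (l a - a)\<bar>" unfolding N_def D_def by simp
      also have "\<dots> \<le> \<bar>\<sigma> - \<sigma>'\<bar> + \<bar>l a - a\<bar>" by (rule abs_triangle_ineq4)
      also have "\<dots> \<le> d * K" using \<sigma>d la unfolding K_def by (simp add: abs_minus_commute algebra_simps)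
      also have "\<dots> \<le> \<theta> * \<kappa>" by (rule dK(2))
      also have "\<dots> \<le> \<theta> * D" using D \<theta> by (simp add: mult_left_mono)
      finally show ?thesis .
    qed
    have cpos: "N / D > 0" "N / D \<ge> exp (- g)" "N / D \<le> exp g"
    proof -
      have Dp: "D > 0" using D \<kappa> by simp
      have \<theta>1: "\<theta> \<le> 1 - exp (- g)" "\<theta> \<le> exp g - 1" unfolding \<theta>_def by auto
      have lo: "(1 - \<theta>) * D \<le> N" using ND by (simp add: abs_le_iff algebra_simps)
      have hi: "N \<le> (1 + \<theta>) * D" using ND by (simp add: abs_le_iff algebra_simps)
      have "exp (- g) * D \<le> (1 - \<theta>) * D" using \<theta>1 Dp by (intro mult_right_mono) auto
      then have "exp (- g) * D \<le> N" using lo by linarith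
      then show "N / D \<ge> exp (- g)" using Dp by (simp add: field_simps)
      then show "N / D > 0" by (meson exp_gt_zero less_le_trans)
      have "(1 + \<theta>) * D \<le> exp g * D" using \<theta>1 Dp by (intro mult_right_mono) auto
      then have "N \<le> exp g * D" using hi by linarith
      then show "N / D \<le> exp g" using Dp by (simp add: field_simps)
    qed
    define lam where "lam = Lam l s a \<sigma>' \<sigma> \<kappa>"
    have s0: "0 \<le> s" using s by simp
    note ctx = l0 s0 a(1) a(2) \<kappa>(1)
    have ccq: "cc l a \<sigma>' \<sigma> \<kappa> = N / D" unfolding N_def D_def by (rule cc_def[where l=l and s=s and a=a and \<sigma>'=\<sigma>' and \<sigma>=\<sigma> and \<kappa>=\<kappa>, OF ctx])
    have lamCB: "CB g lam {0..}" unfolding lam_def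
      by (rule Lam_CB[where l=l and s=s and a=a and \<sigma>'=\<sigma>' and \<sigma>=\<sigma> and \<kappa>=\<kappa>, OF ctx l(1)]) (use l(2) d1 ccq cpos in auto)
    have lam0: "lam 0 = 0" unfolding lam_def by (rule Lam0[where l=l and s=s and a=a and \<sigma>'=\<sigma>' and \<sigma>=\<sigma> and \<kappa>=\<kappa>, OF ctx])
    have lamL: "lam \<in> LamSet" "gammaL lam \<le> g" using LamSet_from_CB[OF _ lamCB lam0] g by auto
    have lamdev: "\<bar>lam t - t\<bar> \<le> \<eta>" if t: "t \<ge> 0" for t
    proof -
      have dv: "\<bar>l r - r\<bar> \<le> d * K" if "0 \<le> r" "r \<le> a" for r
      proof -
        have "\<bar>l r - r\<bar> \<le> 2 * d * r" by (rule ldev[OF that(1)])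
        also have "\<dots> \<le> 2 * d * (\<sigma> + 1)" using that a(3) d0 by (intro mult_left_mono) auto
        also have "\<dots> \<le> d * K" unfolding K_def using d0 by (simp add: algebra_simps)
        finally show ?thesis .
      qed
      have ds: "\<bar>\<sigma> - \<sigma>'\<bar> \<le> d * K" using \<sigma>d K d0 by (simp add: abs_minus_commute) (smt (verit) mult_le_cancel_left1)
      have "\<bar>lam t - t\<bar> \<le> d * K" unfolding lam_def by (rule Lam_dev[where l=l and s=s and a=a and \<sigma>'=\<sigma>' and \<sigma>=\<sigma> and \<kappa>=\<kappa>, OF ctx dv ds t])
      then show ?thesis using dK(3) by linarith
    qed
    have lam1: "\<And>t. t \<le> s \<Longrightarrow> lam t = t" unfolding lam_def by (rule Lam1[where l=l and s=s and a=a and \<sigma>'=\<sigma>' and \<sigma>=\<sigma> and \<kappa>=\<kappa>, OF ctx])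
    have lam2: "\<And>t. s \<le> t \<Longrightarrow> t \<le> s + a \<Longrightarrow> lam t = s + l (t - s)" unfolding lam_def by (rule Lam2[where l=l and s=s and a=a and \<sigma>'=\<sigma>' and \<sigma>=\<sigma> and \<kappa>=\<kappa>, OF ctx])
    have lam3: "\<And>t. s + a \<le> t \<Longrightarrow> t \<le> s + \<sigma>' + \<kappa> \<Longrightarrow> lam t = s + l a + (t - s - a) * (N / D)"
      unfolding lam_def ccq[symmetric] by (rule Lam3[where l=l and s=s and a=a and \<sigma>'=\<sigma>' and \<sigma>=\<sigma> and \<kappa>=\<kappa>, OF ctx])
    have lam4: "\<And>t. s + \<sigma>' + \<kappa> \<le> t \<Longrightarrow> lam t = t + \<sigma> - \<sigma>'" unfolding lam_def by (rule Lam4[where l=l and s=s and a=a and \<sigma>'=\<sigma>' and \<sigma>=\<sigma> and \<kappa>=\<kappa>, OF ctx])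
    define X where "X = graft nu s mu'"
    have Xcad: "X \<in> cadlag" unfolding X_def using graft_cadlag[OF nu _ mu' nt] s by simp
    have Xf: "\<And>t. X t = (if t < s then nu t else if t < s + \<sigma>' then graftM (nu s) (mu' (t - s)) else nu (t - \<sigma>'))"
      unfolding X_def \<sigma>'_def by (rule graft_eq[OF nt])
    have XMF: "\<And>t. t \<ge> 0 \<Longrightarrow> X t \<in> MF" by (rule cadlagD(1)[OF Xcad])
    have lamnn: "\<And>t. t \<ge> 0 \<Longrightarrow> lam t \<ge> 0" by (rule LamSet_nonneg[OF lamL(1)])
    have Dp: "D > 0" using D \<kappa> by simp
    have Xnear: "dBL (X t') (nu s) \<le> 2 * \<epsilon>4" if t': "s + a \<le> t'" "t' \<le> s + \<sigma>' + \<kappa>" for t'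
    proof (cases "t' < s + \<sigma>'")
      case True
      define r where "r = t' - s"
      have r: "a \<le> r" "0 \<le> r" using t' a(1) unfolding r_def by auto
      have Xt: "X t' = graftM (nu s) (mu' r)" using Xf[of t'] True t' a(1) unfolding r_def by simp
      have lr: "l a \<le> l r" by (rule lmono[OF a(1) r(1)])
      have lr0: "0 \<le> l r" by (rule lnn[OF r(2)])
      have "dBL (graftM (nu s) (mu' r)) (nu s) \<le> dBL (mu' r) zeroM" by (rule dBL_graft0[OF nusMF mu'MF[OF r(2)]])
      also have "\<dots> \<le> dBL (mu' r) (mu (l r)) + dBL (mu (l r)) zeroM"
        by (rule dBL_tri[OF mu'MF[OF r(2)] muMF[OF lr0] zeroM_MF])
      also have "\<dots> \<le> \<epsilon>4 + \<epsilon>4"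
      proof -
        have "dBL (mu (l r)) zeroM < \<epsilon>4" using \<rho>(2) lr0 lr C2 by auto
        then show ?thesis using src[OF r(2)] by linarith
      qed
      finally show ?thesis using Xt by simp
    next
      case False
      have Xt: "X t' = nu (t' - \<sigma>')" using Xf[of t'] False t' a(1) \<sigma>'0 s by simp
      have "dBL (nu (t' - \<sigma>')) (nu s) < \<epsilon>4" using \<kappa>0(2) False t' \<kappa> by auto
      then show ?thesis using Xt \<epsilon>4 by simp
    qed
    have la0: "0 \<le> l a" by (rule lnn[OF a(1)])
    have Ynear: "dBL (Y v) (nu s) \<le> \<epsilon>4" if v: "s + l a \<le> v" "v \<le> s + \<sigma> + \<kappa>" for v
    proof (cases "v < s + \<sigma>")
      case True
      have Yv: "Y v = graftM (nu s) (mu (v - s))" using Yf[of v] True v la0 by simp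
      have "dBL (graftM (nu s) (mu (v - s))) (nu s) \<le> dBL (mu (v - s)) zeroM"
        by (rule dBL_graft0[OF nusMF muMF]) (use v la0 in simp)
      also have "\<dots> < \<epsilon>4" using \<rho>(2) v la0 C2 by auto
      finally show ?thesis using Yv by simp
    next
      case False
      have Yv: "Y v = nu (v - \<sigma>)" using Yf[of v] False v la0 \<sigma>0 by simp
      have "dBL (nu (v - \<sigma>)) (nu s) < \<epsilon>4" using \<kappa>0(2) False v \<kappa> by auto
      then show ?thesis using Yv by simp
    qed
    have close: "dBL (X t) (Y (lam t)) \<le> \<epsilon>" if t: "t \<ge> 0" for t
    proof -
      have e4: "3 * \<epsilon>4 \<le> \<epsilon>" unfolding \<epsilon>4_def using \<epsilon> by simp
      consider "t < s" | "s \<le> t" "t < s + a" | "s + a \<le> t" "t \<le> s + \<sigma>' + \<kappa>" | "s + \<sigma>' + \<kappa> < t" by linarith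
      then show ?thesis
      proof cases
        case 1
        then have "X t = nu t" "Y (lam t) = nu t" using lam1[of t] Xf[of t] Yf[of t] by auto
        then show ?thesis using \<epsilon> by simp
      next
        case 2
        define r where "r = t - s"
        have r: "0 \<le> r" "r < a" using 2 unfolding r_def by auto
        then have ap: "a > 0" by simp
        have lra: "l r \<le> l a" by (rule lmono[OF r(1)]) (use r in simp)
        have lr0: "0 \<le> l r" by (rule lnn[OF r(1)])
        have lt: "lam t = s + l r" using lam2[of t] 2 unfolding r_def by simp
        have Xt: "X t = graftM (nu s) (mu' r)" using Xf[of t] 2 a(2) unfolding r_def by simp
        have Yt: "Y (lam t) = graftM (nu s) (mu (l r))" using Yf[of "s + l r"] lt lr0 lra C1[OF ap] by simp
        have "dBL (graftM (nu s) (mu' r)) (graftM (nu s) (mu (l r))) \<le> dBL (mu' r) (mu (l r))"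
          by (rule dBL_graft2[OF nusMF mu'MF[OF r(1)] muMF[OF lr0]])
        also have "\<dots> \<le> \<epsilon>4" by (rule src[OF r(1)])
        finally show ?thesis using Xt Yt e4 \<epsilon>4 by simp
      next
        case 3
        define v where "v = lam t"
        have v: "v = s + l a + (t - s - a) * (N / D)" unfolding v_def by (rule lam3[OF 3])
        have nn: "0 \<le> (t - s - a) * (N / D)" by (rule mult_nonneg_nonneg) (use 3 cpos(1) in auto)
        have v1: "s + l a \<le> v" unfolding v using nn by linarith
        have "(t - s - a) * (N / D) \<le> D * (N / D)"
          by (rule mult_right_mono) (use 3 cpos(1) in \<open>auto simp: D_def\<close>)
        also have "D * (N / D) = N" using Dp by simp
        finally have v2: "v \<le> s + \<sigma> + \<kappa>" unfolding v N_def by simp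
        have v0: "v \<ge> 0" using v1 s la0 by linarith
        have "dBL (X t) (Y v) \<le> dBL (X t) (nu s) + dBL (nu s) (Y v)"
          by (rule dBL_tri[OF XMF[OF t] nusMF YMF[OF v0]])
        also have "\<dots> \<le> 2 * \<epsilon>4 + \<epsilon>4" using Xnear[OF 3] Ynear[OF v1 v2] dBL_sym[of "nu s" "Y v"] by linarith
        finally show ?thesis using e4 unfolding v_def by simp
      next
        case 4
        have lt: "lam t = t + \<sigma> - \<sigma>'" using lam4[of t] 4 by simp
        have Xt: "X t = nu (t - \<sigma>')" using Xf[of t] 4 \<kappa> \<sigma>'0 s by simp
        have Yt: "Y (lam t) = nu (t - \<sigma>')" using Yf[of "t + \<sigma> - \<sigma>'"] lt 4 \<kappa> \<sigma>0 s by simp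
        show ?thesis using Xt Yt \<epsilon> by simp
      qed
    qed
    have "dS X Y \<le> max (gammaL lam) (2 * \<epsilon> + 2 * \<eta> * card P + exp (- (T - \<eta>)))"
      by (rule dS_upper[OF XMF YMF lamL(1) lamdev _ _ close P]) (use \<eta> \<epsilon> in auto)
    then show "dS (graft nu s mu') (graft nu s mu) < e"
      unfolding X_def[symmetric] Y_def[symmetric] using lamL(2) g bound by linarith
  qed
qed

lemma dS_self: "dS x x \<le> 0"
proof -
  have "(\<lambda>u. indicator {0..} u * ennreal (exp (- u) * dSu x x (\<lambda>t. t) u)) = (\<lambda>u::real. 0::ennreal)"
  proof (rule ext)
    fix u :: real
    have "dSu x x (\<lambda>t. t) u \<le> 0" by (rule dSu_le) simp
    then have "exp (- u) * dSu x x (\<lambda>t. t) u \<le> 0" by (simp add: mult_nonneg_nonpos)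
    then show "indicator {0..} u * ennreal (exp (- u) * dSu x x (\<lambda>t. t) u) = 0"
      by (simp add: ennreal_eq_0_iff)
  qed
  then have "dSI x x (\<lambda>t. t) = 0" unfolding dSI_def by simp
  then have "enn2real (dSI x x (\<lambda>t. t)) = 0" by simp
  then show ?thesis using dS_le[OF id_LamSet(1), of x x] id_LamSet(2) by simp
qed

theorem lemma5p4:
  fixes nu :: "real \<Rightarrow> real measure" and s :: real
  assumes "nu \<in> cadlag" and "s > 0"
  shows "(\<forall>mu\<in>D0. graft nu s mu \<in> cadlag) \<and>
         (\<forall>mu\<in>D0. \<forall>e>0. \<exists>d>0. \<forall>mu'\<in>D0. d0 mu' mu < d \<longrightarrow>
              dS (graft nu s mu') (graft nu s mu) < e)"
proof (cases "deadset nu \<noteq> {} \<and> lifetime nu \<le> s")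
  case True
  then have gn: "\<And>mu. graft nu s mu = nu" unfolding graft_def by simp
  show ?thesis
  proof (intro conjI ballI allI impI)
    fix mu assume "mu \<in> D0"
    show "graft nu s mu \<in> cadlag" using assms(1) gn by simp
  next
    fix mu and e :: real assume "mu \<in> D0" "e > 0"
    then show "\<exists>d>0. \<forall>mu'\<in>D0. d0 mu' mu < d \<longrightarrow> dS (graft nu s mu') (graft nu s mu) < e"
      using dS_self[of nu] gn by (intro exI[of _ 1]) auto
  qed
next
  case False
  show ?thesis
  proof (intro conjI ballI allI impI)
    fix mu assume "mu \<in> D0"
    then show "graft nu s mu \<in> cadlag" using graft_cadlag[OF assms(1) _ _ False] assms(2) by simp
  next
    fix mu and e :: real assume "mu \<in> D0" "e > 0"
    then show "\<exists>d>0. \<forall>mu'\<in>D0. d0 mu' mu < d \<longrightarrow> dS (graft nu s mu') (graft nu s mu) < e"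
      by (rule main_cont[OF assms(1) assms(2) False])
  qed
qed

end
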